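(* Let $\Omega\subset\mathbb{R}^N$ be a bounded domain, $d_S,d_I>0$, and $\Lambda,\beta,\gamma$ positive continuous functions on $\bar{\Omega}$. Let $J:\mathbb{R}^N\to\mathbb{R}$ be continuous with $J(0)>0$, $J(x)=J(-x)\ge 0$, $\int_{\mathbb{R}^N}J=1$ and $\int_{\Omega}J(x-y)\,dy\not\equiv 1$. Consider $$\begin{cases}\partial_t S=d_S\int_{\mathbb{R}^N}J(x-y)(S(y,t)-S(x,t))\,dy+\Lambda(x)-\frac{\beta(x)SI}{S+I}+\gamma(x)I, & x\in\Omega,\ t>0,\\ \partial_t I=d_I\int_{\mathbb{R}^N}J(x-y)(I(y,t)-I(x,t))\,dy+\frac{\beta(x)SI}{S+I}-\gamma(x)I, & x\in\Omega,\ t>0,\\ S(x,0)=S_0(x),\ I(x,0)=I_0(x), & x\in\Omega,\\ S(x,t)=I(x,t)=0, & x\in\mathbb{R}^N\setminus\Omega,\ t>0,\end{cases}$$ where $\frac{SI}{S+I}$ is defined to be $0$ when $S=0$ or $I=0$, and the initial data $S_0,I_0\in C(\bar\Omega)$ satisfy $S_0\ge 0$, $I_0\ge 0$, $\int_\Omega I_0\,dx>0$. Let $S_*\in C(\bar\Omega)$ be the unique positive solution of $d_S\int_{\mathbb{R}^N}J(x-y)(S_*(y)-S_*(x))\,dy+\Lambda(x)=0$ in $\Omega$, $S_*=0$ on $\mathbb{R}^N\setminus\Omega$, so that $(S_*,0)$ is the disease-free equilibrium. Let $R_0$ be the basic reproduction number defined in the context. If $R_0<1$, then the (unique, nonnegative)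 solution $(S(x,t),I(x,t))$ satisfies $S(\cdot,t)\to S_*$ and $I(\cdot,t)\to 0$ uniformly on $\bar{\Omega}$ as $t\to+\infty$.
   Context: Basic reproduction number: on $X=C(\bar\Omega)$, let $T(t)$ be the semigroup generated by $A[u](x)=d_I\left(\int_{\Omega}J(x-y)u(y)\,dy-u(x)\right)-\gamma(x)u(x)$, let $\mathscr{L}[\phi](x)=\beta(x)\int_0^\infty (T(t)\phi)(x)\,dt$, and let $R_0=r(\mathscr{L})$ be the spectral radius of $\mathscr{L}$. *)

theory Defs
  imports "HOL-Analysis.Analysis"
begin

definition nlA :: "'a::euclidean_space set \<Rightarrow> ('a \<Rightarrow> real) \<Rightarrow> real \<Rightarrow> ('a \<Rightarrow> real)
    \<Rightarrow> ('a \<Rightarrow> real) \<Rightarrow> ('a \<Rightarrow> real)" where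
  "nlA \<Omega> J dI \<gamma> u = (\<lambda>x. dI * ((LINT y:\<Omega>|lborel. J (x - y) * u y) - u x) - \<gamma> x * u x)"

definition nlT :: "'a::euclidean_space set \<Rightarrow> ('a \<Rightarrow> real) \<Rightarrow> real \<Rightarrow> ('a \<Rightarrow> real)
    \<Rightarrow> real \<Rightarrow> ('a \<Rightarrow> real) \<Rightarrow> ('a \<Rightarrow> real)" where
  "nlT \<Omega> J dI \<gamma> t \<phi> = (\<lambda>x. \<Sum>k. t ^ k / fact k * ((nlA \<Omega> J dI \<gamma> ^^ k) \<phi>) x)"

definition nextgen :: "'a::euclidean_space set \<Rightarrow> ('a \<Rightarrow> real) \<Rightarrow> real \<Rightarrow> ('a \<Rightarrow> real)
    \<Rightarrow> ('a \<Rightarrow> real) \<Rightarrow> ('a \<Rightarrow> real) \<Rightarrow> ('a \<Rightarrow> real)" where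
  "nextgen \<Omega> J dI \<gamma> \<beta> \<phi> = (\<lambda>x. \<beta> x * (LINT t:{0..}|lborel. nlT \<Omega> J dI \<gamma> t \<phi> x))"

definition opnorm_on :: "'a::topological_space set \<Rightarrow> (('a \<Rightarrow> real) \<Rightarrow> ('a \<Rightarrow> real)) \<Rightarrow> real" where
  "opnorm_on K L = (SUP \<phi>\<in>{\<phi>. continuous_on K \<phi> \<and> (\<forall>x\<in>K. \<bar>\<phi> x\<bar> \<le> 1)}. (SUP x\<in>K. \<bar>L \<phi> x\<bar>))"

text \<open>Spectral radius of a bounded operator on C(K), via the Gelfand formula
  r(L) = lim_n ||L^n||^(1/n).\<close>
definition spectral_radius_on :: "'a::topological_space set \<Rightarrow> (('a \<Rightarrow> real) \<Rightarrow> ('a \<Rightarrow> real)) \<Rightarrow> real" where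
  "spectral_radius_on K L = lim (\<lambda>n. opnorm_on K (L ^^ n) powr (1 / real n))"

definition R0 :: "'a::euclidean_space set \<Rightarrow> ('a \<Rightarrow> real) \<Rightarrow> real \<Rightarrow> ('a \<Rightarrow> real)
    \<Rightarrow> ('a \<Rightarrow> real) \<Rightarrow> real" where
  "R0 \<Omega> J dI \<gamma> \<beta> = spectral_radius_on (closure \<Omega>) (nextgen \<Omega> J dI \<gamma> \<beta>)"

definition incid :: "real \<Rightarrow> real \<Rightarrow> real" where
  "incid s i = (if s = 0 \<or> i = 0 then 0 else s * i / (s + i))"

end

theory Submission
  imports Defs
begin

locale nls =
  fixes \<Omega> :: "'a::euclidean_space set" and J :: "'a \<Rightarrow> real"
  assumes opn: "open \<Omega>" and bnd: "bounded \<Omega>" and ne: "\<Omega> \<noteq> {}"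
    and Jcont: "continuous_on UNIV J" and Jnn: "\<And>x. J x \<ge> 0" and Jsym: "\<And>x. J x = J (- x)"
    and Jint: "integrable lborel J" and Jone: "(LINT x|lborel. J x) = 1"
begin

abbreviation "K \<equiv> closure \<Omega>"

definition Kop :: "('a \<Rightarrow> real) \<Rightarrow> 'a \<Rightarrow> real" where
  "Kop u x = (LINT y:\<Omega>|lborel. J (x - y) * u y)"

definition nrm :: "('a \<Rightarrow> real) \<Rightarrow> real" where
  "nrm u = (SUP x\<in>K. \<bar>u x\<bar>)"

lemma Kcompact: "compact K"
  using bnd by (simp add: compact_closure)

lemma Kne: "K \<noteq> {}" using ne by simp

lemma OmK: "\<Omega> \<subseteq> K" by (rule closure_subset)

lemma Omeas[measurable]: "\<Omega> \<in> sets lborel"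
  using opn by simp

lemma Ofin: "emeasure lborel \<Omega> < \<infinity>"
  using bnd by (rule emeasure_bounded_finite)

lemma Jbound: "\<exists>B. \<forall>y\<in>K. \<bar>J (x - y)\<bar> \<le> B"
proof -
  have "compact ((\<lambda>y. J (x - y)) ` K)"
    by (intro compact_continuous_image Kcompact continuous_on_compose2[OF Jcont]) (auto intro!: continuous_intros)
  then obtain B where "\<forall>z\<in>(\<lambda>y. J (x - y)) ` K. norm z \<le> B"
    using compact_imp_bounded bounded_iff by metis
  then show ?thesis by auto
qed

lemma Jmeas[measurable]: "J \<in> borel_measurable borel"
  using Jcont by (rule borel_measurable_continuous_onI)

lemma cont_bound: fixes u :: "'a \<Rightarrow> real" shows "continuous_on K u \<Longrightarrow> \<exists>B. \<forall>y\<in>K. \<bar>u y\<bar> \<le> B"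
proof -
  assume "continuous_on K u"
  then have "compact (u ` K)" by (intro compact_continuous_image Kcompact)
  then obtain B where "\<forall>z\<in>u ` K. norm z \<le> B"
    using compact_imp_bounded bounded_iff by metis
  then show ?thesis by auto
qed

lemma cont_meas: fixes u :: "'a \<Rightarrow> real" shows "continuous_on K u \<Longrightarrow> (\<lambda>y. indicator \<Omega> y * u y) \<in> borel_measurable lborel"
proof -
  assume "continuous_on K u"
  then have "continuous_on \<Omega> u" using OmK continuous_on_subset by blast
  then have "(\<lambda>y. indicator \<Omega> y *\<^sub>R u y) \<in> borel_measurable borel"
    by (intro borel_measurable_continuous_on_indicator) (use opn in auto)
  then show ?thesis by simp
qed

lemma Kop_integrable: fixes u :: "'a \<Rightarrow> real" shows "continuous_on K u \<Longrightarrow> set_integrable lborel \<Omega> (\<lambda>y. J (x - y) * u y)"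
proof -
  assume u: "continuous_on K u"
  obtain B1 where B1: "\<forall>y\<in>K. \<bar>J (x - y)\<bar> \<le> B1" using Jbound by blast
  obtain B2 where B2: "\<forall>y\<in>K. \<bar>u y\<bar> \<le> B2" using cont_bound[OF u] by blast
  have m: "(\<lambda>y. indicator \<Omega> y * u y) \<in> borel_measurable lborel" using cont_meas[OF u] .
  have m2: "(\<lambda>y. J (x - y)) \<in> borel_measurable lborel" by measurable
  show ?thesis unfolding set_integrable_def
  proof (rule integrableI_bounded_set[where A=\<Omega> and B="B1*B2"])
    have "(\<lambda>y. J (x - y) * (indicator \<Omega> y * u y)) \<in> borel_measurable lborel"
      using m m2 by measurable
    then show "(\<lambda>y. indicator \<Omega> y *\<^sub>R (J (x - y) * u y)) \<in> borel_measurable lborel"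
      by (simp add: mult.left_commute)
    show "AE y in lborel. y \<in> \<Omega> \<longrightarrow> norm (indicator \<Omega> y *\<^sub>R (J (x - y) * u y)) \<le> B1 * B2"
      using B1 B2 OmK by (intro AE_I2) (auto simp: abs_mult intro!: mult_mono)
  qed (use Ofin opn in auto)
qed

lemma cont_set_int: fixes u :: "'a \<Rightarrow> real"
  assumes u: "continuous_on K u" shows "set_integrable lborel \<Omega> u"
proof -
  obtain B2 where B2: "\<forall>y\<in>K. \<bar>u y\<bar> \<le> B2" using cont_bound[OF u] by blast
  show ?thesis unfolding set_integrable_def
  proof (rule integrableI_bounded_set[where A=\<Omega> and B="B2"])
    show "(\<lambda>y. indicator \<Omega> y *\<^sub>R u y) \<in> borel_measurable lborel"
      using cont_meas[OF u] by simp
    show "AE y in lborel. y \<in> \<Omega> \<longrightarrow> norm (indicator \<Omega> y *\<^sub>R u y) \<le> B2"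
      using B2 OmK by (intro AE_I2) auto
  qed (use Ofin opn in auto)
qed

lemma J_shift: "integrable lborel (\<lambda>y. J (x - y))" "(LINT y|lborel. J (x - y)) = 1"
proof -
  have eq: "\<And>y. J (x - y) = J (- x + y)" using Jsym by (metis minus_diff_eq uminus_add_conv_diff)
  have d: "distr lborel borel ((+) (- x)) = lborel" by (rule lborel_distr_plus)
  have "integrable (distr lborel borel ((+) (- x))) J" using d Jint by simp
  then have "integrable lborel (\<lambda>y. J (- x + y))"
    by (subst (asm) integrable_distr_eq) auto
  then show "integrable lborel (\<lambda>y. J (x - y))" using eq by simp
  have "integral\<^sup>L (distr lborel borel ((+) (- x))) J = (LINT y|lborel. J (- x + y))"
    by (rule integral_distr) auto
  then show "(LINT y|lborel. J (x - y)) = 1" using d Jone eq by simp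
qed

lemma KJ_int: "set_integrable lborel \<Omega> (\<lambda>y. J (x - y))"
  using Kop_integrable[of "\<lambda>_. 1" x] by simp

lemma KJ_bounds: "0 \<le> (LINT y:\<Omega>|lborel. J (x - y))" "(LINT y:\<Omega>|lborel. J (x - y)) \<le> 1"
proof -
  show "0 \<le> (LINT y:\<Omega>|lborel. J (x - y))"
    unfolding set_lebesgue_integral_def
    by (rule integral_nonneg_AE) (auto intro!: AE_I2 simp: Jnn)
  have "(LINT y:\<Omega>|lborel. J (x - y)) = (LINT y|lborel. indicator \<Omega> y * J (x - y))"
    unfolding set_lebesgue_integral_def by simp
  also have "\<dots> \<le> (LINT y|lborel. J (x - y))"
    using KJ_int J_shift(1)[of x] unfolding set_integrable_def
    by (intro integral_mono) (auto simp: Jnn split: split_indicator)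
  finally show "(LINT y:\<Omega>|lborel. J (x - y)) \<le> 1" using J_shift(2) by simp
qed

lemma nrm_ge: fixes u :: "'a \<Rightarrow> real"
  assumes "continuous_on K u" "x \<in> K" shows "\<bar>u x\<bar> \<le> nrm u"
proof -
  obtain B where "\<forall>y\<in>K. \<bar>u y\<bar> \<le> B" using cont_bound[OF assms(1)] by blast
  then have "bdd_above ((\<lambda>x. \<bar>u x\<bar>) ` K)" by (auto intro: bdd_aboveI2)
  then show ?thesis unfolding nrm_def using assms(2) by (rule cSUP_upper2) simp
qed

lemma nrm_le: fixes u :: "'a \<Rightarrow> real"
  assumes "\<And>x. x \<in> K \<Longrightarrow> \<bar>u x\<bar> \<le> B" shows "nrm u \<le> B"
  unfolding nrm_def using Kne assms by (intro cSUP_least) auto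

lemma nrm_nonneg: fixes u :: "'a \<Rightarrow> real"
  assumes "continuous_on K u" shows "0 \<le> nrm u"
proof -
  obtain x where "x \<in> K" using Kne by (meson ex_in_conv)
  then show ?thesis using nrm_ge[OF assms] by (meson abs_ge_zero order_trans)
qed

lemma nrm_cong: "(\<And>x. x \<in> K \<Longrightarrow> u x = v x) \<Longrightarrow> nrm u = nrm v"
  unfolding nrm_def by (intro SUP_cong) auto

lemma Kop_cong: "(\<And>y. y \<in> \<Omega> \<Longrightarrow> u y = v y) \<Longrightarrow> Kop u x = Kop v x"
  unfolding Kop_def by (rule set_lebesgue_integral_cong) (use opn in auto)

lemma Kop_add: fixes u v :: "'a \<Rightarrow> real"
  assumes "continuous_on K u" "continuous_on K v"
  shows "Kop (\<lambda>y. u y + v y) x = Kop u x + Kop v x"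
  unfolding Kop_def using Kop_integrable[OF assms(1)] Kop_integrable[OF assms(2)]
  by (simp add: distrib_left)

lemma Kop_diff: fixes u v :: "'a \<Rightarrow> real"
  assumes "continuous_on K u" "continuous_on K v"
  shows "Kop (\<lambda>y. u y - v y) x = Kop u x - Kop v x"
  unfolding Kop_def using Kop_integrable[OF assms(1)] Kop_integrable[OF assms(2)]
  by (simp add: right_diff_distrib)

lemma Kop_scale: "Kop (\<lambda>y. c * u y) x = c * Kop u x"
  unfolding Kop_def by (simp add: mult.left_commute)

lemma Kop_const: "Kop (\<lambda>y. c) x = c * (LINT y:\<Omega>|lborel. J (x - y))"
  unfolding Kop_def by (simp add: mult.commute)

lemma Kop_mono: fixes u v :: "'a \<Rightarrow> real"
  assumes "continuous_on K u" "continuous_on K v" "\<And>y. y \<in> \<Omega> \<Longrightarrow> u y \<le> v y"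
  shows "Kop u x \<le> Kop v x"
  unfolding Kop_def using Kop_integrable[OF assms(1)] Kop_integrable[OF assms(2)] assms(3)
  by (intro set_integral_mono) (auto intro!: mult_left_mono simp: Jnn)

lemma Kop_nonneg: fixes u :: "'a \<Rightarrow> real"
  assumes "continuous_on K u" "\<And>y. y \<in> \<Omega> \<Longrightarrow> 0 \<le> u y"
  shows "0 \<le> Kop u x"
  using Kop_mono[of "\<lambda>_. 0" u x] assms by (simp add: Kop_def)

lemma Kop_le_max: fixes u :: "'a \<Rightarrow> real"
  assumes "continuous_on K u" "\<And>y. y \<in> \<Omega> \<Longrightarrow> u y \<le> M" "0 \<le> M"
  shows "Kop u x \<le> M"
proof -
  have "Kop u x \<le> Kop (\<lambda>_. M) x" using assms by (intro Kop_mono) auto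
  also have "\<dots> \<le> M" unfolding Kop_const using KJ_bounds[of x] assms(3)
    by (simp add: mult_left_le)
  finally show ?thesis .
qed

lemma Kop_bound: fixes u :: "'a \<Rightarrow> real"
  assumes u: "continuous_on K u" shows "\<bar>Kop u x\<bar> \<le> nrm u"
proof -
  have b: "\<And>y. y \<in> \<Omega> \<Longrightarrow> \<bar>u y\<bar> \<le> nrm u" using nrm_ge[OF u] OmK by auto
  have "Kop u x \<le> nrm u" using b nrm_nonneg[OF u] by (intro Kop_le_max[OF u]) (auto simp: abs_le_iff)
  moreover have "Kop (\<lambda>y. - u y) x \<le> nrm u" using b nrm_nonneg[OF u]
    by (intro Kop_le_max) (auto simp: abs_le_iff intro!: continuous_intros u)
  moreover have "Kop (\<lambda>y. - u y) x = - Kop u x" using Kop_scale[of "-1" u x] by simp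
  ultimately show ?thesis by auto
qed

lemma Kop_lborel: fixes u :: "'a \<Rightarrow> real"
  assumes u: "continuous_on K u"
  shows "(LINT y|lborel. J (x - y) * (indicator \<Omega> y * u y - u x)) = Kop u x - u x"
proof -
  have i1: "integrable lborel (\<lambda>y. indicator \<Omega> y *\<^sub>R (J (x - y) * u y))"
    using Kop_integrable[OF u, of x] unfolding set_integrable_def .
  have i2: "integrable lborel (\<lambda>y. u x * J (x - y))" using J_shift(1)[of x] by simp
  have "(LINT y|lborel. J (x - y) * (indicator \<Omega> y * u y - u x))
      = (LINT y|lborel. indicator \<Omega> y *\<^sub>R (J (x - y) * u y) - u x * J (x - y))"
    by (intro Bochner_Integration.integral_cong) (auto simp: algebra_simps)
  also have "\<dots> = Kop u x - u x"
    using i1 i2 J_shift(2)[of x] by (simp add: Kop_def set_lebesgue_integral_def)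
  finally show ?thesis .
qed

lemma param_cont:
  fixes h :: "'p::metric_space \<Rightarrow> 'a \<Rightarrow> real"
  assumes P: "compact P" and h: "continuous_on (P \<times> K) (\<lambda>(p, y). h p y)"
  shows "continuous_on P (\<lambda>p. LINT y:\<Omega>|lborel. h p y)"
proof -
  have "compact ((\<lambda>(p, y). h p y) ` (P \<times> K))"
    by (intro compact_continuous_image h compact_Times P Kcompact)
  then obtain B where B: "\<forall>z\<in>(\<lambda>(p, y). h p y) ` (P \<times> K). norm z \<le> B"
    using compact_imp_bounded bounded_iff by metis
  have hc: "continuous_on K (h p)" if "p \<in> P" for p
  proof -
    have "continuous_on K (\<lambda>y. (\<lambda>(p, y). h p y) (p, y))"
      by (rule continuous_on_compose2[OF h]) (use that in \<open>auto intro!: continuous_intros\<close>)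
    then show ?thesis by simp
  qed
  have hp: "continuous_on P (\<lambda>p. h p y)" if "y \<in> K" for y
  proof -
    have "continuous_on P (\<lambda>p. (\<lambda>(p, y). h p y) (p, y))"
      by (rule continuous_on_compose2[OF h]) (use that in \<open>auto intro!: continuous_intros\<close>)
    then show ?thesis by simp
  qed
  show ?thesis
  proof (rule continuous_on_sequentiallyI)
    fix u a assume u: "\<forall>n. u n \<in> P" and a: "a \<in> P" and lim: "u \<longlonglongrightarrow> a"
    show "(\<lambda>n. LINT y:\<Omega>|lborel. h (u n) y) \<longlonglongrightarrow> (LINT y:\<Omega>|lborel. h a y)"
      unfolding set_lebesgue_integral_def
    proof (rule integral_dominated_convergence[where w="\<lambda>y. indicator \<Omega> y * B"])
      show "(\<lambda>y. indicator \<Omega> y *\<^sub>R h a y) \<in> borel_measurable lborel"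
        using cont_meas[OF hc[OF a]] by simp
      show "(\<lambda>y. indicator \<Omega> y *\<^sub>R h (u n) y) \<in> borel_measurable lborel" for n
        using cont_meas[OF hc[OF u[rule_format, of n]]] by simp
      show "integrable lborel (\<lambda>y. indicator \<Omega> y * B)"
        using cont_set_int[of "\<lambda>_. B"] unfolding set_integrable_def by simp
      show "AE y in lborel. (\<lambda>n. indicator \<Omega> y *\<^sub>R h (u n) y) \<longlonglongrightarrow> indicator \<Omega> y *\<^sub>R h a y"
      proof (intro AE_I2)
        fix y show "(\<lambda>n. indicator \<Omega> y *\<^sub>R h (u n) y) \<longlonglongrightarrow> indicator \<Omega> y *\<^sub>R h a y"
        proof (cases "y \<in> \<Omega>")
          case True
          have "(\<lambda>n. h (u n) y) \<longlonglongrightarrow> h a y"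
            using continuous_on_tendsto_compose[OF hp lim a] True OmK u by auto
          then show ?thesis using True by simp
        qed simp
      qed
      show "AE y in lborel. norm (indicator \<Omega> y *\<^sub>R h (u n) y) \<le> indicator \<Omega> y * B" for n
        using B u OmK by (intro AE_I2) (auto split: split_indicator)
    qed
  qed
qed

lemma Kop_cont: fixes u :: "'a \<Rightarrow> real"
  assumes u: "continuous_on K u" shows "continuous_on K (Kop u)"
  unfolding Kop_def
proof (rule param_cont[OF Kcompact])
  have 1: "continuous_on (K \<times> K) (\<lambda>z. J (fst z - snd z))"
    by (rule continuous_on_compose2[OF Jcont]) (auto intro!: continuous_intros)
  have 2: "continuous_on (K \<times> K) (\<lambda>z. u (snd z))"
    by (rule continuous_on_compose2[OF u]) (auto intro!: continuous_intros)
  show "continuous_on (K \<times> K) (\<lambda>(p, y). J (p - y) * u y)"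
    using continuous_on_mult[OF 1 2] by (simp add: case_prod_unfold)
qed

end

lemma ser_cont_gen:
  fixes f :: "nat \<Rightarrow> 'b::topological_space \<Rightarrow> real"
  assumes c: "\<And>k. continuous_on S (f k)" and b: "\<And>k x. x \<in> S \<Longrightarrow> \<bar>f k x\<bar> \<le> M k"
    and s: "summable M"
  shows "continuous_on S (\<lambda>x. \<Sum>k. f k x)"
proof (rule uniform_limit_theorem)
  show "uniform_limit S (\<lambda>n x. \<Sum>i<n. f i x) (\<lambda>x. \<Sum>k. f k x) sequentially"
    by (rule Weierstrass_m_test) (use b s in auto)
  show "\<forall>\<^sub>F n in sequentially. continuous_on S (\<lambda>x. \<Sum>i<n. f i x)"
    by (intro always_eventually allI continuous_on_sum c)
qed simp

context nls begin

definition Pop :: "real \<Rightarrow> ('a \<Rightarrow> real) \<Rightarrow> ('a \<Rightarrow> real) \<Rightarrow> 'a \<Rightarrow> real" where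
  "Pop a p u x = a * Kop u x + p x * u x"

lemma Pop_cont: fixes u :: "'a \<Rightarrow> real"
  assumes "continuous_on K p" "continuous_on K u" shows "continuous_on K (Pop a p u)"
  unfolding Pop_def[abs_def] using assms Kop_cont[OF assms(2)] by (intro continuous_intros) auto

lemma Pop_add: fixes u v :: "'a \<Rightarrow> real"
  assumes "continuous_on K u" "continuous_on K v"
  shows "Pop a p (\<lambda>y. u y + v y) x = Pop a p u x + Pop a p v x"
  unfolding Pop_def Kop_add[OF assms] by (simp add: algebra_simps)

lemma Pop_scale: "Pop a p (\<lambda>y. c * u y) x = c * Pop a p u x"
  unfolding Pop_def Kop_scale by (simp add: algebra_simps)

lemma Pop_cong: "(\<And>y. y \<in> K \<Longrightarrow> u y = v y) \<Longrightarrow> x \<in> K \<Longrightarrow> Pop a p u x = Pop a p v x"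
  unfolding Pop_def using Kop_cong[of u v x] OmK by auto

lemma Pop_bound: fixes u :: "'a \<Rightarrow> real"
  assumes u: "continuous_on K u" and P: "\<And>x. x \<in> K \<Longrightarrow> \<bar>p x\<bar> \<le> P" and x: "x \<in> K"
  shows "\<bar>Pop a p u x\<bar> \<le> (\<bar>a\<bar> + P) * nrm u"
proof -
  have "\<bar>Pop a p u x\<bar> \<le> \<bar>a\<bar> * \<bar>Kop u x\<bar> + \<bar>p x\<bar> * \<bar>u x\<bar>"
    unfolding Pop_def by (metis abs_mult abs_triangle_ineq)
  also have "\<dots> \<le> \<bar>a\<bar> * nrm u + P * nrm u"
    using Kop_bound[OF u, of x] nrm_ge[OF u x] P[OF x]
    by (intro add_mono mult_mono) auto
  finally show ?thesis by (simp add: algebra_simps)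
qed

lemma Pop_pow_cont: fixes u :: "'a \<Rightarrow> real"
  assumes "continuous_on K p" "continuous_on K u" shows "continuous_on K ((Pop a p ^^ k) u)"
  by (induction k) (auto intro: Pop_cont assms)

lemma Pop_pow_add: fixes u v :: "'a \<Rightarrow> real"
  assumes "continuous_on K p" "continuous_on K u" "continuous_on K v"
  shows "(Pop a p ^^ k) (\<lambda>y. u y + v y) = (\<lambda>x. (Pop a p ^^ k) u x + (Pop a p ^^ k) v x)"
proof (induction k)
  case (Suc k)
  show ?case using Pop_add[OF Pop_pow_cont[OF assms(1,2)] Pop_pow_cont[OF assms(1,3)]]
    by (simp add: Suc)
qed simp

lemma Pop_pow_scale: "(Pop a p ^^ k) (\<lambda>y. c * u y) = (\<lambda>x. c * (Pop a p ^^ k) u x)"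
proof (induction k)
  case (Suc k)
  show ?case by (simp add: Suc Pop_scale)
qed simp

lemma Pop_pow_cong: "(\<And>y. y \<in> K \<Longrightarrow> u y = v y) \<Longrightarrow> x \<in> K \<Longrightarrow> (Pop a p ^^ k) u x = (Pop a p ^^ k) v x"
proof (induction k arbitrary: x)
  case (Suc k)
  then show ?case by (auto intro!: Pop_cong)
qed simp

lemma Pop_pow_bound: fixes u :: "'a \<Rightarrow> real"
  assumes p: "continuous_on K p" and u: "continuous_on K u" and P: "\<And>x. x \<in> K \<Longrightarrow> \<bar>p x\<bar> \<le> P"
  shows "nrm ((Pop a p ^^ k) u) \<le> (\<bar>a\<bar> + P) ^ k * nrm u"
proof (induction k)
  case 0
  then show ?case by simp
next
  case (Suc k)
  have "nrm ((Pop a p ^^ Suc k) u) \<le> (\<bar>a\<bar> + P) * nrm ((Pop a p ^^ k) u)"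
    using Pop_bound[OF Pop_pow_cont[OF p u] P] by (intro nrm_le) auto
  also have "\<dots> \<le> (\<bar>a\<bar> + P) * ((\<bar>a\<bar> + P) ^ k * nrm u)"
  proof (rule mult_left_mono[OF Suc])
    obtain x where "x \<in> K" using Kne by (meson ex_in_conv)
    then show "0 \<le> \<bar>a\<bar> + P" using P[of x] by linarith
  qed
  finally show ?case by simp
qed

lemma ser_summable: fixes f :: "nat \<Rightarrow> 'a \<Rightarrow> real"
  assumes c: "\<And>k. continuous_on K (f k)" and s: "summable (\<lambda>k. nrm (f k))" and x: "x \<in> K"
  shows "summable (\<lambda>k. f k x)" "summable (\<lambda>k. \<bar>f k x\<bar>)"
proof -
  show "summable (\<lambda>k. \<bar>f k x\<bar>)"
    by (rule summable_comparison_test[OF _ s]) (use nrm_ge[OF c x] in auto)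
  then show "summable (\<lambda>k. f k x)" by (rule summable_rabs_cancel)
qed

lemma ser_cont: fixes f :: "nat \<Rightarrow> 'a \<Rightarrow> real"
  assumes c: "\<And>k. continuous_on K (f k)" and s: "summable (\<lambda>k. nrm (f k))"
  shows "continuous_on K (\<lambda>x. \<Sum>k. f k x)"
  by (rule ser_cont_gen[OF c _ s]) (use nrm_ge[OF c] in auto)

lemma ser_nrm: fixes f :: "nat \<Rightarrow> 'a \<Rightarrow> real"
  assumes c: "\<And>k. continuous_on K (f k)" and s: "summable (\<lambda>k. nrm (f k))"
  shows "nrm (\<lambda>x. \<Sum>k. f k x) \<le> (\<Sum>k. nrm (f k))"
proof (rule nrm_le)
  fix x assume x: "x \<in> K"
  have "\<bar>\<Sum>k. f k x\<bar> \<le> (\<Sum>k. \<bar>f k x\<bar>)"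
    by (rule summable_rabs) (rule ser_summable(2)[OF c s x])
  also have "\<dots> \<le> (\<Sum>k. nrm (f k))"
    using ser_summable[OF c s x] s nrm_ge[OF c x] by (intro suminf_le) auto
  finally show "\<bar>\<Sum>k. f k x\<bar> \<le> (\<Sum>k. nrm (f k))" .
qed

lemma Kop_ser: fixes f :: "nat \<Rightarrow> 'a \<Rightarrow> real"
  assumes c: "\<And>k. continuous_on K (f k)" and s: "summable (\<lambda>k. nrm (f k))"
  shows "Kop (\<lambda>y. \<Sum>k. f k y) x = (\<Sum>k. Kop (f k) x)"
proof -
  obtain B1 where B1: "\<forall>y\<in>K. \<bar>J (x - y)\<bar> \<le> B1" using Jbound by blast
  define g where "g k y = indicator \<Omega> y *\<^sub>R (J (x - y) * f k y)" for k y
  have gi: "integrable lborel (g k)" for k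
    using Kop_integrable[OF c[of k], of x] unfolding g_def set_integrable_def .
  have B1nn: "0 \<le> B1" using B1 Kne by (meson abs_ge_zero ex_in_conv order_trans)
  have gb: "\<bar>g k y\<bar> \<le> B1 * nrm (f k)" for k y
  proof (cases "y \<in> \<Omega>")
    case True
    then have "y \<in> K" using OmK by auto
    have e: "\<bar>g k y\<bar> = \<bar>J (x - y)\<bar> * \<bar>f k y\<bar>" using True by (simp add: g_def abs_mult)
    show ?thesis unfolding e using B1 nrm_ge[OF c \<open>y \<in> K\<close>] \<open>y \<in> K\<close>
      by (intro mult_mono) auto
  next
    case False
    have "0 \<le> B1 * nrm (f k)" using B1nn nrm_nonneg[OF c] by simp
    then show ?thesis using False by (simp add: g_def)
  qed
  have s1: "summable (\<lambda>k. \<bar>g k y\<bar>)" for y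
    by (rule summable_comparison_test[of _ "\<lambda>k. B1 * nrm (f k)"]) (use gb s in auto)
  have ig: "(LINT y|lborel. norm (g k y)) \<le> B1 * nrm (f k) * measure lborel \<Omega>" for k
  proof -
    have "(LINT y|lborel. norm (g k y)) \<le> (LINT y|lborel. indicator \<Omega> y * (B1 * nrm (f k)))"
    proof (rule integral_mono)
      show "integrable lborel (\<lambda>y. norm (g k y))" using gi by simp
      show "integrable lborel (\<lambda>y. indicator \<Omega> y * (B1 * nrm (f k)))"
        using cont_set_int[of "\<lambda>_. B1 * nrm (f k)"] unfolding set_integrable_def by simp
      show "norm (g k y) \<le> indicator \<Omega> y * (B1 * nrm (f k))" for y
        using gb[of k y] by (auto simp: g_def split: split_indicator)
    qed
    also have "\<dots> = B1 * nrm (f k) * measure lborel \<Omega>"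
      using Ofin by (simp add: mult.commute)
    finally show ?thesis .
  qed
  have s2: "summable (\<lambda>k. LINT y|lborel. norm (g k y))"
    by (rule summable_comparison_test[of _ "\<lambda>k. B1 * nrm (f k) * measure lborel \<Omega>"])
       (use ig summable_mult2[OF summable_mult[OF s, of B1], of "measure lborel \<Omega>"] in auto)
  have "Kop (\<lambda>y. \<Sum>k. f k y) x = (LINT y|lborel. (\<Sum>k. g k y))"
  proof -
    have "indicator \<Omega> y *\<^sub>R (J (x - y) * (\<Sum>k. f k y)) = (\<Sum>k. g k y)" for y
    proof (cases "y \<in> \<Omega>")
      case True
      then have "y \<in> K" using OmK by auto
      have "(\<lambda>k. J (x - y) * f k y) sums (J (x - y) * (\<Sum>k. f k y))"
        by (intro sums_mult summable_sums ser_summable[OF c s \<open>y \<in> K\<close>])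
      then show ?thesis using True by (simp add: g_def sums_iff)
    qed (simp add: g_def)
    then show ?thesis unfolding Kop_def set_lebesgue_integral_def by simp
  qed
  also have "\<dots> = (\<Sum>k. LINT y|lborel. g k y)"
    by (rule integral_suminf) (use gi s1 s2 in auto)
  also have "\<dots> = (\<Sum>k. Kop (f k) x)"
    unfolding Kop_def set_lebesgue_integral_def g_def ..
  finally show ?thesis .
qed

lemma Pop_ser: fixes f :: "nat \<Rightarrow> 'a \<Rightarrow> real"
  assumes c: "\<And>k. continuous_on K (f k)" and s: "summable (\<lambda>k. nrm (f k))" and x: "x \<in> K"
  shows "Pop a p (\<lambda>y. \<Sum>k. f k y) x = (\<Sum>k. Pop a p (f k) x)"
proof -
  have s1: "summable (\<lambda>k. Kop (f k) x)"
    by (rule summable_rabs_cancel, rule summable_comparison_test[OF _ s])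
       (use Kop_bound[OF c] in auto)
  have "(\<lambda>k. Pop a p (f k) x) sums (a * (\<Sum>k. Kop (f k) x) + p x * (\<Sum>k. f k x))"
    unfolding Pop_def
    by (intro sums_add sums_mult summable_sums s1 ser_summable[OF c s x])
  then show ?thesis unfolding Pop_def Kop_ser[OF c s] by (simp add: sums_iff)
qed

end

context nls begin

lemma comparison:
  fixes v D b :: "'a \<Rightarrow> real \<Rightarrow> real"
  assumes cont: "continuous_on (K \<times> {0..Tm}) (\<lambda>(x, t). v x t)"
    and init: "\<And>x. x \<in> K \<Longrightarrow> v x 0 \<le> 0"
    and deriv: "\<And>x t. x \<in> K \<Longrightarrow> 0 < t \<Longrightarrow> t \<le> Tm \<Longrightarrow> (v x has_real_derivative D x t) (at t)"
    and ineq: "\<And>x t. x \<in> K \<Longrightarrow> 0 < t \<Longrightarrow> t \<le> Tm \<Longrightarrow> D x t \<le> a * Kop (\<lambda>y. v y t) x + b x t * v x t"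
    and a: "0 \<le> a" and bB: "\<And>x t. x \<in> K \<Longrightarrow> 0 < t \<Longrightarrow> t \<le> Tm \<Longrightarrow> \<bar>b x t\<bar> \<le> B"
    and x: "x \<in> K" and t: "0 \<le> t" "t \<le> Tm"
  shows "v x t \<le> 0"
proof (rule ccontr)
  assume neg: "\<not> v x t \<le> 0"
  define lam where "lam = a + \<bar>B\<bar> + 1"
  define u where "u = (\<lambda>(y, s). exp (- lam * s) * v y s)"
  define Q where "Q = K \<times> {0..Tm}"
  have Qc: "compact Q" unfolding Q_def by (intro compact_Times Kcompact compact_Icc)
  have Qne: "Q \<noteq> {}" unfolding Q_def using x t by auto
  have uc: "continuous_on Q u" unfolding u_def Q_def
    using cont by (auto simp: case_prod_unfold intro!: continuous_intros)
  obtain z where zQ: "z \<in> Q" and zmax: "\<And>q. q \<in> Q \<Longrightarrow> u q \<le> u z"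
    using continuous_attains_sup[OF Qc Qne uc] by blast
  obtain x1 t1 where z: "z = (x1, t1)" by (cases z)
  define M where "M = u z"
  have xtQ: "(x, t) \<in> Q" unfolding Q_def using x t by auto
  have Mpos: "0 < M" using zmax[OF xtQ] neg unfolding M_def u_def
    by (smt (verit) exp_gt_zero mult_pos_pos case_prod_conv)
  have x1: "x1 \<in> K" and t1: "0 \<le> t1" "t1 \<le> Tm" using zQ z Q_def by auto
  have M: "M = exp (- lam * t1) * v x1 t1" unfolding M_def z u_def by simp
  have t1pos: "0 < t1"
  proof (rule ccontr)
    assume "\<not> 0 < t1"
    then have "t1 = 0" using t1 by simp
    then show False using M Mpos init[OF x1] by simp
  qed
  define e where "e = exp (- lam * t1)"
  have epos: "0 < e" unfolding e_def by simp
  have vc: "continuous_on K (\<lambda>y. v y t1)"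
  proof -
    have "continuous_on K (\<lambda>y. (\<lambda>(x, t). v x t) (y, t1))"
      by (rule continuous_on_compose2[OF cont]) (use t1 in \<open>auto intro!: continuous_intros\<close>)
    then show ?thesis by simp
  qed
  have Kle: "Kop (\<lambda>y. e * v y t1) x1 \<le> M"
  proof (rule Kop_le_max)
    show "continuous_on K (\<lambda>y. e * v y t1)" using vc by (intro continuous_intros)
    show "0 \<le> M" using Mpos by simp
    fix y assume "y \<in> \<Omega>"
    then have "(y, t1) \<in> Q" unfolding Q_def using OmK t1 by auto
    then show "e * v y t1 \<le> M" using zmax[of "(y, t1)"] unfolding M_def u_def e_def by simp
  qed
  have bM: "b x1 t1 * M \<le> \<bar>B\<bar> * M"
    using bB[OF x1 t1pos t1(2)] Mpos by (intro mult_right_mono) auto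
  have D': "e * D x1 t1 \<le> a * M + \<bar>B\<bar> * M"
  proof -
    have "e * D x1 t1 \<le> e * (a * Kop (\<lambda>y. v y t1) x1 + b x1 t1 * v x1 t1)"
      using ineq[OF x1 t1pos t1(2)] epos by (intro mult_left_mono) auto
    also have "\<dots> = a * Kop (\<lambda>y. e * v y t1) x1 + b x1 t1 * M"
      unfolding Kop_scale M e_def by (simp add: algebra_simps)
    also have "\<dots> \<le> a * M + \<bar>B\<bar> * M"
      using Kle a bM by (intro add_mono mult_left_mono) auto
    finally show ?thesis .
  qed
  have der: "((\<lambda>s. exp (- lam * s) * v x1 s) has_real_derivative
      (exp (- lam * t1) * (- lam) * v x1 t1 + exp (- lam * t1) * D x1 t1)) (at t1)"
  proof -
    have "((\<lambda>s. exp (- lam * s)) has_real_derivative (exp (- lam * t1) * (- lam))) (at t1)"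
      by (rule derivative_eq_intros refl | simp)+
    from DERIV_mult[OF this deriv[OF x1 t1pos t1(2)]] show ?thesis by (simp add: mult.commute)
  qed
  have neg': "exp (- lam * t1) * (- lam) * v x1 t1 + exp (- lam * t1) * D x1 t1 < 0"
  proof -
    have "exp (- lam * t1) * (- lam) * v x1 t1 = - lam * M" unfolding M by simp
    then show ?thesis using D' Mpos unfolding e_def lam_def by (simp add: algebra_simps)
  qed
  obtain d where d: "0 < d" "\<And>h. 0 < h \<Longrightarrow> h < d \<Longrightarrow> exp (- lam * t1) * v x1 t1 < exp (- lam * (t1 - h)) * v x1 (t1 - h)"
    using DERIV_neg_dec_left[OF der neg'] by blast
  define h where "h = min (d / 2) t1"
  have h: "0 < h" "h < d" "h \<le> t1" unfolding h_def using d(1) t1pos by auto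
  have "(x1, t1 - h) \<in> Q" unfolding Q_def using x1 h t1 by auto
  from zmax[OF this] have "exp (- lam * (t1 - h)) * v x1 (t1 - h) \<le> M" unfolding M_def u_def by simp
  with d(2)[OF h(1,2)] M show False by simp
qed

lemma extend_deriv:
  fixes f D :: "'a \<Rightarrow> real \<Rightarrow> real"
  assumes fc: "continuous_on (K \<times> {0..}) (\<lambda>(x, t). f x t)"
    and Dc: "continuous_on (K \<times> {0..}) (\<lambda>(x, t). D x t)"
    and der: "\<And>x t. x \<in> \<Omega> \<Longrightarrow> 0 < t \<Longrightarrow> (f x has_real_derivative D x t) (at t)"
    and x: "x \<in> K" and t: "0 < t"
  shows "(f x has_real_derivative D x t) (at t)"
proof -
  have fx: "continuous_on S (f y)" if "y \<in> K" "S \<subseteq> {0..}" for y S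
  proof -
    have "continuous_on S (\<lambda>s. (\<lambda>(x, t). f x t) (y, s))"
      by (rule continuous_on_compose2[OF fc]) (use that in \<open>auto intro!: continuous_intros\<close>)
    then show ?thesis by simp
  qed
  have Dx: "continuous_on S (D y)" if "y \<in> K" "S \<subseteq> {0..}" for y S
  proof -
    have "continuous_on S (\<lambda>s. (\<lambda>(x, t). D x t) (y, s))"
      by (rule continuous_on_compose2[OF Dc]) (use that in \<open>auto intro!: continuous_intros\<close>)
    then show ?thesis by simp
  qed
  have eq: "f y s = f y 0 + integral {0..s} (D y)" if s: "0 \<le> s" and y: "y \<in> K" for s y
  proof -
    define F where "F y = f y s - f y 0 - integral {0..s} (D y)" for y
    have Fc: "continuous_on K F"
    proof -
      have c1: "continuous_on K (\<lambda>y. f y s)"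
      proof -
        have "continuous_on K (\<lambda>y. (\<lambda>(x, t). f x t) (y, s))"
          by (rule continuous_on_compose2[OF fc]) (use s in \<open>auto intro!: continuous_intros\<close>)
        then show ?thesis by simp
      qed
      have c0: "continuous_on K (\<lambda>y. f y 0)"
      proof -
        have "continuous_on K (\<lambda>y. (\<lambda>(x, t). f x t) (y, 0))"
          by (rule continuous_on_compose2[OF fc]) (auto intro!: continuous_intros)
        then show ?thesis by simp
      qed
      have ci: "continuous_on K (\<lambda>y. integral (cbox 0 s) (D y))"
        by (rule integral_continuous_on_param) (rule continuous_on_subset[OF Dc], auto)
      show ?thesis unfolding F_def using c1 c0 ci by (intro continuous_intros) auto
    qed
    have F0: "F y = 0" if "y \<in> \<Omega>" for y
    proof -
      have "(D y has_integral (f y s - f y 0)) {0..s}"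
      proof (rule fundamental_theorem_of_calculus_interior[OF s])
        show "continuous_on {0..s} (f y)" using fx OmK that by auto
        show "(f y has_vector_derivative D y r) (at r)" if "r \<in> {0<..<s}" for r
          using der[of y r] that \<open>y \<in> \<Omega>\<close> by (simp add: has_real_derivative_iff_has_vector_derivative)
      qed
      then show ?thesis unfolding F_def by (simp add: integral_unique)
    qed
    have "closed {y \<in> K. F y = 0}"
      by (rule continuous_closed_preimage_constant[OF Fc]) simp
    moreover have "\<Omega> \<subseteq> {y \<in> K. F y = 0}" using F0 OmK by auto
    ultimately have "K \<subseteq> {y \<in> K. F y = 0}" by (rule closure_minimal[rotated])
    then show ?thesis using y unfolding F_def by auto
  qed
  define G where "G s = f x 0 + integral {0..s} (D x)" for s
  have "(G has_vector_derivative D x t) (at t within {0..t+1})"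
  proof -
    have "((\<lambda>u. integral {0..u} (D x)) has_vector_derivative D x t) (at t within {0..t+1})"
      by (rule integral_has_vector_derivative) (use Dx[OF x, of "{0..t+1}"] t in auto)
    from has_vector_derivative_add[OF has_vector_derivative_const[of "f x 0"] this]
    show ?thesis unfolding G_def by (metis add_0)
  qed
  moreover have "at t within {0..t+1} = at t" by (rule at_within_Icc_at) (use t in auto)
  ultimately have "(G has_real_derivative D x t) (at t)"
    by (simp add: has_real_derivative_iff_has_vector_derivative)
  then show ?thesis
  proof (rule has_field_derivative_transform_within_open[where S="{0<..<t+1}"])
    fix s assume "s \<in> {0<..<t+1}"
    then have "0 \<le> s" by simp
    from eq[OF this x] show "G s = f x s" unfolding G_def by simp
  qed (use t in auto)
qed

end

locale nls2 = nls +
  fixes dI :: real and \<gamma> :: "'a \<Rightarrow> real"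
  assumes dI: "0 < dI" and gc: "continuous_on K \<gamma>" and gpos: "\<And>x. x \<in> K \<Longrightarrow> 0 < \<gamma> x"
begin

definition "g0 = (INF x\<in>K. \<gamma> x)"
definition "gmax = nrm \<gamma>"
definition "pA = (\<lambda>x. - dI - \<gamma> x)"
definition "A = Pop dI pA"
definition "T t \<phi> = nlT \<Omega> J dI \<gamma> t \<phi>"
definition "cA = 2 * dI + gmax"

lemma g0: "0 < g0" "\<And>x. x \<in> K \<Longrightarrow> g0 \<le> \<gamma> x"
proof -
  obtain x0 where x0: "x0 \<in> K" "\<And>y. y \<in> K \<Longrightarrow> \<gamma> x0 \<le> \<gamma> y"
    using continuous_attains_inf[OF Kcompact Kne gc] by blast
  have "g0 = \<gamma> x0" unfolding g0_def
    by (rule antisym) (auto intro!: cINF_lower2[OF _ x0(1)] cINF_greatest Kne x0(2) bdd_belowI2[of _ "\<gamma> x0"])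
  then show "0 < g0" using gpos[OF x0(1)] by simp
  show "g0 \<le> \<gamma> x" if "x \<in> K" for x using \<open>g0 = \<gamma> x0\<close> x0(2)[OF that] by simp
qed

lemma gmax: "\<And>x. x \<in> K \<Longrightarrow> \<gamma> x \<le> gmax" "g0 \<le> gmax"
proof -
  show "\<gamma> x \<le> gmax" if "x \<in> K" for x using nrm_ge[OF gc that] unfolding gmax_def by simp
  obtain x where "x \<in> K" using Kne by (meson ex_in_conv)
  then show "g0 \<le> gmax" using g0(2)[of x] nrm_ge[OF gc \<open>x \<in> K\<close>] unfolding gmax_def by simp
qed

lemma pA_cont: "continuous_on K pA" unfolding pA_def[abs_def] by (intro continuous_intros gc)
lemma pA_bound: "x \<in> K \<Longrightarrow> \<bar>pA x\<bar> \<le> dI + gmax"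
  unfolding pA_def using gpos[of x] gmax(1)[of x] dI by simp

lemma cA: "\<bar>dI\<bar> + (dI + gmax) = cA" "0 < cA" unfolding cA_def using dI g0 gmax by auto

lemma nlA_eq: "nlA \<Omega> J dI \<gamma> = A"
  unfolding A_def nlA_def[abs_def] Pop_def[abs_def] Kop_def pA_def by (auto simp: algebra_simps)

lemma T_def2: "T t \<phi> x = (\<Sum>k. t ^ k / fact k * (A ^^ k) \<phi> x)"
  unfolding T_def nlT_def nlA_eq ..

lemma A_cont: "continuous_on K u \<Longrightarrow> continuous_on K (A u)"
  unfolding A_def by (rule Pop_cont[OF pA_cont])

lemma Apow_cont: "continuous_on K u \<Longrightarrow> continuous_on K ((A ^^ k) u)"
  unfolding A_def by (rule Pop_pow_cont[OF pA_cont])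

lemma Apow_nrm: assumes u: "continuous_on K u" shows "nrm ((A ^^ k) u) \<le> cA ^ k * nrm u"
proof -
  have "nrm ((Pop dI pA ^^ k) u) \<le> (\<bar>dI\<bar> + (dI + gmax)) ^ k * nrm u"
    by (rule Pop_pow_bound[OF pA_cont u pA_bound])
  then show ?thesis unfolding A_def cA .
qed

lemma Apow_bound: "continuous_on K u \<Longrightarrow> x \<in> K \<Longrightarrow> \<bar>(A ^^ k) u x\<bar> \<le> cA ^ k * nrm u"
  using nrm_ge[OF Apow_cont] Apow_nrm by (meson order_trans)

lemma Tterm_bound:
  assumes u: "continuous_on K u" and x: "x \<in> K"
  shows "\<bar>t ^ k / fact k * (A ^^ k) u x\<bar> \<le> (\<bar>t\<bar> * cA) ^ k / fact k * nrm u"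
proof -
  have "\<bar>t ^ k / fact k * (A ^^ k) u x\<bar> = \<bar>t\<bar> ^ k / fact k * \<bar>(A ^^ k) u x\<bar>"
    by (simp add: abs_mult power_abs)
  also have "\<dots> \<le> \<bar>t\<bar> ^ k / fact k * (cA ^ k * nrm u)"
    by (intro mult_left_mono Apow_bound u x) auto
  finally show ?thesis by (simp add: power_mult_distrib)
qed

lemma exp_summable: fixes r N :: real shows "summable (\<lambda>k. r ^ k / fact k * N)"
  using summable_mult2[OF summable_exp[of r], of N] by (simp add: field_simps)

lemma Tser_nrm_summable:
  assumes u: "continuous_on K u"
  shows "summable (\<lambda>k. nrm (\<lambda>y. t ^ k / fact k * (A ^^ k) u y))"
proof (rule summable_comparison_test[OF _ exp_summable[of "\<bar>t\<bar> * cA" "nrm u"]])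
  show "\<exists>N. \<forall>n\<ge>N. norm (nrm (\<lambda>y. t ^ n / fact n * (A ^^ n) u y)) \<le> (\<bar>t\<bar> * cA) ^ n / fact n * nrm u"
  proof (intro exI allI impI)
    fix n
    have c: "continuous_on K (\<lambda>y. t ^ n / fact n * (A ^^ n) u y)"
      by (intro continuous_intros Apow_cont u)
    have "nrm (\<lambda>y. t ^ n / fact n * (A ^^ n) u y) \<le> (\<bar>t\<bar> * cA) ^ n / fact n * nrm u"
      by (rule nrm_le) (rule Tterm_bound[OF u])
    then show "norm (nrm (\<lambda>y. t ^ n / fact n * (A ^^ n) u y)) \<le> (\<bar>t\<bar> * cA) ^ n / fact n * nrm u"
      using nrm_nonneg[OF c] by simp
  qed
qed

lemma Tterm_cont: "continuous_on K u \<Longrightarrow> continuous_on K (\<lambda>y. t ^ k / fact k * (A ^^ k) u y)"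
  by (intro continuous_intros Apow_cont)

lemma T_cont: "continuous_on K u \<Longrightarrow> continuous_on K (T t u)"
  unfolding T_def2[abs_def] by (rule ser_cont[OF Tterm_cont Tser_nrm_summable])

lemma T_summable: "continuous_on K u \<Longrightarrow> x \<in> K \<Longrightarrow> summable (\<lambda>k. t ^ k / fact k * (A ^^ k) u x)"
  by (rule ser_summable(1)[OF Tterm_cont Tser_nrm_summable])

lemma T_cong: assumes "\<And>y. y \<in> K \<Longrightarrow> u y = v y" "x \<in> K" shows "T t u x = T t v x"
proof -
  have "\<And>k. (Pop dI pA ^^ k) u x = (Pop dI pA ^^ k) v x" using Pop_pow_cong assms by blast
  then show ?thesis unfolding T_def2 A_def by simp
qed

lemma T_scale: assumes "continuous_on K u" "x \<in> K" shows "T t (\<lambda>y. c * u y) x = c * T t u x"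
proof -
  define X where "X k = (A ^^ k) u x" for k
  have "T t (\<lambda>y. c * u y) x = (\<Sum>k. c * (t ^ k / fact k * X k))"
    unfolding T_def2 A_def Pop_pow_scale X_def by (simp add: algebra_simps)
  also have "\<dots> = c * (\<Sum>k. t ^ k / fact k * X k)"
    by (rule suminf_mult) (unfold X_def, rule T_summable[OF assms])
  finally show ?thesis unfolding T_def2 X_def .
qed

lemma T_add: "continuous_on K u \<Longrightarrow> continuous_on K v \<Longrightarrow> x \<in> K \<Longrightarrow> T t (\<lambda>y. u y + v y) x = T t u x + T t v x"
  unfolding T_def2 A_def Pop_pow_add[OF pA_cont]
  using suminf_add[OF T_summable[unfolded A_def, of u x t] T_summable[unfolded A_def, of v x t]]
  by (simp add: algebra_simps)

lemma T_zero: "T 0 u x = u x"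
proof -
  have "T 0 u x = (\<Sum>k. (A ^^ k) u x / fact k * 0 ^ k)" unfolding T_def2 by (simp add: mult.commute)
  also have "\<dots> = u x" by (subst powser_zero) simp
  finally show ?thesis .
qed

lemma T_joint_cont:
  assumes u: "continuous_on K u"
  shows "continuous_on (K \<times> {0..Tm}) (\<lambda>(x, t). T t u x)"
proof -
  have "continuous_on (K \<times> {0..Tm}) (\<lambda>z. \<Sum>k. snd z ^ k / fact k * (A ^^ k) u (fst z))"
  proof (rule ser_cont_gen)
    show "continuous_on (K \<times> {0..Tm}) (\<lambda>z. snd z ^ k / fact k * (A ^^ k) u (fst z))" for k
      by (intro continuous_intros continuous_on_compose2[OF Apow_cont[OF u]]) auto
    show "\<bar>snd z ^ k / fact k * (A ^^ k) u (fst z)\<bar> \<le> (\<bar>Tm\<bar> * cA) ^ k / fact k * nrm u"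
      if "z \<in> K \<times> {0..Tm}" for k z
    proof -
      have "\<bar>snd z ^ k / fact k * (A ^^ k) u (fst z)\<bar> \<le> (\<bar>snd z\<bar> * cA) ^ k / fact k * nrm u"
        by (rule Tterm_bound[OF u]) (use that in auto)
      also have "\<dots> \<le> (\<bar>Tm\<bar> * cA) ^ k / fact k * nrm u"
        using that cA nrm_nonneg[OF u]
        by (intro mult_right_mono divide_right_mono power_mono) auto
      finally show ?thesis .
    qed
  qed (rule exp_summable)
  then show ?thesis unfolding T_def2 by (simp add: case_prod_unfold)
qed

lemma T_deriv:
  assumes u: "continuous_on K u" and x: "x \<in> K"
  shows "((\<lambda>t. T t u x) has_real_derivative T t (A u) x) (at t)"
proof -
  define c where "c n = (A ^^ n) u x / fact n" for n
  have eq: "T s u x = (\<Sum>n. c n * s ^ n)" for s unfolding T_def2 c_def by (simp add: algebra_simps)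
  have "summable (\<lambda>n. c n * y ^ n)" for y
    using T_summable[OF u x, of y] unfolding c_def by (simp add: algebra_simps)
  from termdiffs_strong_converges_everywhere[OF this]
  have "((\<lambda>s. \<Sum>n. c n * s ^ n) has_real_derivative (\<Sum>n. diffs c n * t ^ n)) (at t)" .
  moreover have "diffs c n * t ^ n = t ^ n / fact n * (A ^^ n) (A u) x" for n
  proof -
    have "(A ^^ n) (A u) = (A ^^ Suc n) u" by (simp add: funpow_swap1)
    have g: "a \<noteq> 0 \<Longrightarrow> a * (X / (a * b)) = X / b" for a b X :: real
      by (cases "b = 0") (simp_all add: field_simps)
    have f: "of_nat (Suc n) * (X / fact (Suc n)) = X / fact n" for X :: real
      by (subst fact_Suc) (rule g, simp)
    show ?thesis unfolding diffs_def c_def f \<open>(A ^^ n) (A u) = (A ^^ Suc n) u\<close> by simp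
  qed
  ultimately show ?thesis unfolding eq T_def2[of _ "A u"] by simp
qed

lemma T_commute:
  assumes u: "continuous_on K u" and x: "x \<in> K"
  shows "A (T t u) x = T t (A u) x"
proof -
  have "A (T t u) x = (\<Sum>k. A (\<lambda>y. t ^ k / fact k * (A ^^ k) u y) x)"
    unfolding T_def2[abs_def] A_def
    by (rule Pop_ser[OF Tterm_cont[OF u, unfolded A_def] Tser_nrm_summable[OF u, unfolded A_def] x])
  also have "\<dots> = (\<Sum>k. t ^ k / fact k * (A ^^ k) (A u) x)"
    unfolding A_def Pop_scale by (simp add: funpow_swap1)
  finally show ?thesis unfolding T_def2 .
qed

end

context nls begin
lemma Kop_neg: "Kop (\<lambda>y. - u y) x = - Kop u x"
  using Kop_scale[of "-1" u x] by simp
lemma KJ_def2: "Kop (\<lambda>y. c) x = c * (LINT y:\<Omega>|lborel. J (x - y))" by (rule Kop_const)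
lemma nrm_neg: "nrm (\<lambda>y. - u y) = nrm u" unfolding nrm_def by simp
end

context nls2 begin

lemma T_pos:
  assumes u: "continuous_on K u" and pos: "\<And>y. y \<in> K \<Longrightarrow> 0 \<le> u y" and x: "x \<in> K" and t: "0 \<le> t"
  shows "0 \<le> T t u x"
proof -
  have "- T t u x \<le> 0"
  proof (rule comparison[where v="\<lambda>x t. - T t u x" and D="\<lambda>x t. - T t (A u) x" and a=dI
        and b="\<lambda>x t. pA x" and B="dI + gmax" and Tm=t])
    show "continuous_on (K \<times> {0..t}) (\<lambda>(x, t). - T t u x)"
      using T_joint_cont[OF u, of t] by (auto simp: case_prod_unfold intro!: continuous_intros)
    show "- T 0 u y \<le> 0" if "y \<in> K" for y using pos[OF that] by (simp add: T_zero)
    show "((\<lambda>s. - T s u y) has_real_derivative - T s (A u) y) (at s)" if "y \<in> K" for y s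
      by (intro DERIV_minus T_deriv u that)
    show "- T s (A u) y \<le> dI * Kop (\<lambda>y. - T s u y) y + pA y * - T s u y" if "y \<in> K" for y s
      using T_commute[OF u that, of s] unfolding A_def Pop_def Kop_neg by simp
    show "\<bar>pA y\<bar> \<le> dI + gmax" if "y \<in> K" for y by (rule pA_bound[OF that])
  qed (use dI x t in auto)
  then show ?thesis by simp
qed

lemma T_decay:
  assumes u: "continuous_on K u" and x: "x \<in> K" and t: "0 \<le> t"
  shows "T t u x \<le> exp (- g0 * t) * nrm u"
proof -
  define N where "N = nrm u"
  have N: "0 \<le> N" unfolding N_def by (rule nrm_nonneg[OF u])
  have "T t u x - exp (- g0 * t) * N \<le> 0"
  proof (rule comparison[where v="\<lambda>x t. T t u x - exp (- g0 * t) * N"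
        and D="\<lambda>x t. T t (A u) x + g0 * exp (- g0 * t) * N" and a=dI
        and b="\<lambda>x t. pA x" and B="dI + gmax" and Tm=t])
    show "continuous_on (K \<times> {0..t}) (\<lambda>(x, t). T t u x - exp (- g0 * t) * N)"
      using T_joint_cont[OF u, of t] by (auto simp: case_prod_unfold intro!: continuous_intros)
    show "T 0 u y - exp (- g0 * 0) * N \<le> 0" if "y \<in> K" for y
      using nrm_ge[OF u that] unfolding N_def by (simp add: T_zero)
    show "((\<lambda>s. T s u y - exp (- g0 * s) * N) has_real_derivative
        T s (A u) y + g0 * exp (- g0 * s) * N) (at s)" if "y \<in> K" for y s
    proof -
      have "((\<lambda>s. exp (- g0 * s) * N) has_real_derivative (exp (- g0 * s) * (- g0) * N)) (at s)"
        by (rule derivative_eq_intros refl | simp)+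
      from DERIV_diff[OF T_deriv[OF u that] this] show ?thesis by (simp add: ac_simps)
    qed
    show "T s (A u) y + g0 * exp (- g0 * s) * N
        \<le> dI * Kop (\<lambda>y. T s u y - exp (- g0 * s) * N) y + pA y * (T s u y - exp (- g0 * s) * N)"
      if "y \<in> K" for y s
    proof -
      define E where "E = exp (- g0 * s) * N"
      have E: "0 \<le> E" unfolding E_def using N by simp
      define kj where "kj = (LINT z:\<Omega>|lborel. J (y - z))"
      have kj: "kj \<le> 1" unfolding kj_def by (rule KJ_bounds(2))
      have k1: "Kop (\<lambda>z. T s u z - E) y = Kop (T s u) y - E * kj"
        unfolding kj_def using Kop_diff[OF T_cont[OF u] continuous_on_const, of s E y] Kop_const[of E y]
        by simp
      have k2: "T s (A u) y = dI * Kop (T s u) y + pA y * T s u y"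
        using T_commute[OF u that, of s] unfolding A_def Pop_def by simp
      have g: "g0 * E \<le> E * (dI * (1 - kj) + \<gamma> y)"
      proof -
        have "g0 \<le> dI * (1 - kj) + \<gamma> y" using g0(2)[OF that] kj dI by (simp add: add_increasing)
        then show ?thesis using E by (simp add: mult_left_mono mult.commute)
      qed
      have r: "dI * Kop (\<lambda>z. T s u z - E) y + pA y * (T s u y - E) = T s (A u) y + E * (dI * (1 - kj) + \<gamma> y)"
        unfolding k1 k2 pA_def by (simp add: algebra_simps)
      have "T s (A u) y + g0 * E \<le> dI * Kop (\<lambda>z. T s u z - E) y + pA y * (T s u y - E)"
        using r g by linarith
      then show ?thesis unfolding E_def by (simp add: mult.assoc)
    qed
    show "\<bar>pA y\<bar> \<le> dI + gmax" if "y \<in> K" for y by (rule pA_bound[OF that])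
  qed (use dI x t in auto)
  then show ?thesis unfolding N_def by simp
qed

lemma T_abs:
  assumes u: "continuous_on K u" and x: "x \<in> K" and t: "0 \<le> t"
  shows "\<bar>T t u x\<bar> \<le> exp (- g0 * t) * nrm u"
proof -
  have "T t (\<lambda>y. - u y) x \<le> exp (- g0 * t) * nrm (\<lambda>y. - u y)"
    by (rule T_decay[OF _ x t]) (intro continuous_intros u)
  moreover have "T t (\<lambda>y. - u y) x = - T t u x" using T_scale[OF u x, of t "-1"] by simp
  ultimately show ?thesis using T_decay[OF u x t] unfolding nrm_neg by linarith
qed

definition "pM = (\<lambda>x. gmax - \<gamma> x)"
definition "M = Pop dI pM"
definition "cN = dI + gmax"
definition "qN = dI + gmax - g0"
definition "Gop u x = (\<Sum>k. (M ^^ k) u x / cN ^ Suc k)"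

lemma pM_cont: "continuous_on K pM" unfolding pM_def[abs_def] by (intro continuous_intros gc)
lemma pM_nonneg: "x \<in> K \<Longrightarrow> 0 \<le> pM x" unfolding pM_def using gmax by simp
lemma pM_bound: "x \<in> K \<Longrightarrow> \<bar>pM x\<bar> \<le> gmax - g0" unfolding pM_def using gmax g0 by simp
lemma cN: "0 < cN" "0 \<le> qN" "qN < cN" "cN - qN = g0"
  unfolding cN_def qN_def using dI g0 gmax by auto

lemma M_cont: "continuous_on K u \<Longrightarrow> continuous_on K ((M ^^ k) u)"
  unfolding M_def by (rule Pop_pow_cont[OF pM_cont])

lemma Mpow_nrm: assumes u: "continuous_on K u" shows "nrm ((M ^^ k) u) \<le> qN ^ k * nrm u"
proof -
  have "nrm ((Pop dI pM ^^ k) u) \<le> (\<bar>dI\<bar> + (gmax - g0)) ^ k * nrm u"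
    by (rule Pop_pow_bound[OF pM_cont u pM_bound])
  then show ?thesis unfolding M_def qN_def using dI by (simp add: add_diff_eq)
qed

lemma M_pos: assumes u: "continuous_on K u" and pos: "\<And>y. y \<in> K \<Longrightarrow> 0 \<le> u y" and x: "x \<in> K"
  shows "0 \<le> M u x"
  unfolding M_def Pop_def using Kop_nonneg[OF u, of x] pos OmK pM_nonneg[OF x] pos[OF x] dI
  by (auto intro!: add_nonneg_nonneg mult_nonneg_nonneg)

lemma Mpow_pos: assumes u: "continuous_on K u" and pos: "\<And>y. y \<in> K \<Longrightarrow> 0 \<le> u y" and x: "x \<in> K"
  shows "0 \<le> (M ^^ k) u x"
  using x
proof (induction k arbitrary: x)
  case (Suc k)
  then show ?case using M_pos[OF M_cont[OF u, of k]] by simp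
qed (use pos in simp)

lemma A_eq_M: "A u x = M u x - cN * u x"
  unfolding A_def M_def Pop_def pA_def pM_def cN_def by (simp add: algebra_simps)

lemma Gterm_cont: "continuous_on K u \<Longrightarrow> continuous_on K (\<lambda>y. (M ^^ k) u y / cN ^ Suc k)"
  by (intro continuous_intros M_cont) (use cN in auto)

lemma Gterm_nrm: assumes u: "continuous_on K u"
  shows "nrm (\<lambda>y. (M ^^ k) u y / cN ^ Suc k) \<le> (qN / cN) ^ k * (nrm u / cN)"
proof (rule nrm_le)
  fix x assume x: "x \<in> K"
  have "\<bar>(M ^^ k) u x / cN ^ Suc k\<bar> = \<bar>(M ^^ k) u x\<bar> / cN ^ Suc k" using cN by simp
  also have "\<dots> \<le> qN ^ k * nrm u / cN ^ Suc k"
    using nrm_ge[OF M_cont[OF u] x, of k] Mpow_nrm[OF u, of k] cN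
    by (intro divide_right_mono) auto
  also have "\<dots> = (qN / cN) ^ k * (nrm u / cN)" by (simp add: power_divide)
  finally show "\<bar>(M ^^ k) u x / cN ^ Suc k\<bar> \<le> (qN / cN) ^ k * (nrm u / cN)" .
qed

lemma Gser_summable: assumes u: "continuous_on K u"
  shows "summable (\<lambda>k. nrm (\<lambda>y. (M ^^ k) u y / cN ^ Suc k))"
proof (rule summable_comparison_test[OF _ summable_mult2[OF summable_geometric]])
  show "norm (qN / cN) < 1" using cN by simp
  show "\<exists>N. \<forall>n\<ge>N. norm (nrm (\<lambda>y. (M ^^ n) u y / cN ^ Suc n)) \<le> (qN / cN) ^ n * (nrm u / cN)"
    using Gterm_nrm[OF u] nrm_nonneg[OF Gterm_cont[OF u]] by auto
qed

lemma G_cont: "continuous_on K u \<Longrightarrow> continuous_on K (Gop u)"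
  unfolding Gop_def[abs_def] by (rule ser_cont[OF Gterm_cont Gser_summable])

lemma G_summable: "continuous_on K u \<Longrightarrow> x \<in> K \<Longrightarrow> summable (\<lambda>k. (M ^^ k) u x / cN ^ Suc k)"
  by (rule ser_summable(1)[OF Gterm_cont Gser_summable])

lemma G_eq: assumes u: "continuous_on K u" and x: "x \<in> K"
  shows "A (Gop u) x = - u x"
proof -
  define a where "a k = (M ^^ k) u x / cN ^ k" for k
  have sa: "summable a"
  proof -
    have "summable (\<lambda>k. cN * ((M ^^ k) u x / cN ^ Suc k))"
      by (rule summable_mult[OF G_summable[OF u x]])
    moreover have "cN * ((M ^^ k) u x / cN ^ Suc k) = a k" for k unfolding a_def using cN by simp
    ultimately show ?thesis by simp
  qed
  have "M (Gop u) x = (\<Sum>k. M (\<lambda>y. (M ^^ k) u y / cN ^ Suc k) x)"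
    unfolding Gop_def[abs_def] M_def
    by (rule Pop_ser[OF Gterm_cont[OF u, unfolded M_def] Gser_summable[OF u, unfolded M_def] x])
  also have "\<dots> = (\<Sum>k. a (Suc k))"
  proof -
    have "M (\<lambda>y. (M ^^ k) u y / cN ^ Suc k) x = a (Suc k)" for k
      using Pop_scale[of dI pM "1 / cN ^ Suc k" "(M ^^ k) u" x] unfolding a_def M_def
      by (simp add: funpow_swap1)
    then show ?thesis by simp
  qed
  also have "\<dots> = suminf a - u x" using suminf_split_head[OF sa] unfolding a_def by simp
  finally have 1: "M (Gop u) x = suminf a - u x" .
  have 2: "cN * Gop u x = suminf a"
  proof -
    have "cN * Gop u x = (\<Sum>k. cN * ((M ^^ k) u x / cN ^ Suc k))"
      unfolding Gop_def by (rule suminf_mult[symmetric, OF G_summable[OF u x]])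
    also have "\<dots> = suminf a" unfolding a_def using cN by simp
    finally show ?thesis .
  qed
  show ?thesis unfolding A_eq_M 1 2 by simp
qed

lemma G_pos: assumes u: "continuous_on K u" and pos: "\<And>y. y \<in> K \<Longrightarrow> 0 \<le> u y" and x: "x \<in> K"
  shows "u x / cN \<le> Gop u x"
proof -
  have "Gop u x = (\<Sum>k. (M ^^ Suc k) u x / cN ^ Suc (Suc k)) + u x / cN"
    unfolding Gop_def using suminf_split_head[OF G_summable[OF u x]] by simp
  moreover have "0 \<le> (\<Sum>k. (M ^^ Suc k) u x / cN ^ Suc (Suc k))"
  proof (rule suminf_nonneg)
    show "summable (\<lambda>k. (M ^^ Suc k) u x / cN ^ Suc (Suc k))"
      using summable_Suc_iff[THEN iffD2, OF G_summable[OF u x]] .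
    show "0 \<le> (M ^^ Suc k) u x / cN ^ Suc (Suc k)" for k
      using Mpow_pos[OF u pos x, of "Suc k"] cN(1) by (intro divide_nonneg_pos) auto
  qed
  ultimately show ?thesis by simp
qed

lemma G_cong: assumes "\<And>y. y \<in> K \<Longrightarrow> u y = v y" "x \<in> K" shows "Gop u x = Gop v x"
proof -
  have "\<And>k. (Pop dI pM ^^ k) u x = (Pop dI pM ^^ k) v x" using Pop_pow_cong assms by blast
  then show ?thesis unfolding Gop_def M_def by simp
qed

lemma G_scale: assumes "continuous_on K u" "x \<in> K" shows "Gop (\<lambda>y. c * u y) x = c * Gop u x"
proof -
  have "Gop (\<lambda>y. c * u y) x = (\<Sum>k. c * ((M ^^ k) u x / cN ^ Suc k))"
    unfolding Gop_def M_def Pop_pow_scale by simp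
  also have "\<dots> = c * Gop u x" unfolding Gop_def by (rule suminf_mult[OF G_summable[OF assms]])
  finally show ?thesis .
qed

lemma G_add: assumes "continuous_on K u" "continuous_on K v" "x \<in> K"
  shows "Gop (\<lambda>y. u y + v y) x = Gop u x + Gop v x"
proof -
  have "Gop (\<lambda>y. u y + v y) x = (\<Sum>k. (M ^^ k) u x / cN ^ Suc k + (M ^^ k) v x / cN ^ Suc k)"
    unfolding Gop_def M_def Pop_pow_add[OF pM_cont assms(1,2)] by (simp add: add_divide_distrib)
  also have "\<dots> = Gop u x + Gop v x" unfolding Gop_def
    by (rule suminf_add[symmetric, OF G_summable[OF assms(1,3)] G_summable[OF assms(2,3)]])
  finally show ?thesis .
qed

end

lemma exp_int: fixes a :: real assumes a: "0 < a"
  shows "integrable lborel (\<lambda>t. exp (- a * t) * indicator {0..} t)"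
proof -
  have "(\<lambda>x. exp (- a * x)) absolutely_integrable_on {0..}"
    by (rule nonnegative_absolutely_integrable_1[OF integrable_on_exp_minus_to_infinity[OF a]]) auto
  then have "integrable lebesgue (\<lambda>x. indicator {0..} x *\<^sub>R exp (- a * x))"
    unfolding set_integrable_def .
  then have "integrable lborel (\<lambda>x. indicator {0..} x *\<^sub>R exp (- a * x))"
    by (subst (asm) integrable_completion) auto
  then show ?thesis by (simp add: mult.commute)
qed

context nls2 begin

lemma T_isCont: "continuous_on K u \<Longrightarrow> x \<in> K \<Longrightarrow> isCont (\<lambda>t. T t u x) s"
  by (rule DERIV_isCont[OF T_deriv])

lemma T_meas: assumes "continuous_on K u" "x \<in> K" shows "(\<lambda>t. T t u x) \<in> borel_measurable borel"
  by (rule borel_measurable_continuous_onI, rule continuous_at_imp_continuous_on) (use T_isCont[OF assms] in auto)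

lemma T_integral:
  assumes u: "continuous_on K u" and x: "x \<in> K"
  shows "(LINT t:{0..}|lborel. T t u x) = Gop u x"
proof -
  define g where "g = Gop u"
  have gc: "continuous_on K g" unfolding g_def by (rule G_cont[OF u])
  have dF: "((\<lambda>s. - T s g x) has_real_derivative T s u x) (at s)" for s
  proof -
    have "T s (A g) x = T s (\<lambda>y. -1 * u y) x"
      by (rule T_cong[OF _ x]) (use G_eq[OF u] in \<open>simp add: g_def\<close>)
    also have "\<dots> = - T s u x" using T_scale[OF u x, of s "-1"] by simp
    finally show ?thesis using DERIV_minus[OF T_deriv[OF gc x, of s]] by simp
  qed
  have I: "(\<integral>t. T t u x * indicator {0..s} t \<partial>lborel) = g x - T s g x" if "0 \<le> s" for s
    using integral_FTC_Icc_real[of 0 s "\<lambda>s. - T s g x" "\<lambda>t. T t u x", OF that dF T_isCont[OF u x]]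
    by (simp add: T_zero)
  have lim1: "((\<lambda>s. \<integral>t. T t u x * indicator {0..s} t \<partial>lborel) \<longlongrightarrow> g x) at_top"
  proof -
    have "filterlim (\<lambda>s. g0 * s) at_top at_top"
      by (rule filterlim_tendsto_pos_mult_at_top[OF tendsto_const g0(1) filterlim_ident])
    then have "filterlim (\<lambda>s. - g0 * s) at_bot at_top" by (simp add: filterlim_uminus_at_bot)
    then have "((\<lambda>s. exp (- g0 * s)) \<longlongrightarrow> 0) at_top" by (rule filterlim_compose[OF exp_at_bot])
    then have "((\<lambda>s. exp (- g0 * s) * nrm g) \<longlongrightarrow> 0) at_top"
      using tendsto_mult[OF _ tendsto_const[of "nrm g"]] by fastforce
    then have "((\<lambda>s. T s g x) \<longlongrightarrow> 0) at_top"
    proof (rule Lim_null_comparison[rotated])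
      show "\<forall>\<^sub>F s in at_top. norm (T s g x) \<le> exp (- g0 * s) * nrm g"
        using eventually_ge_at_top[of "0::real"] by eventually_elim (use T_abs[OF gc x] in auto)
    qed
    then have "((\<lambda>s. g x - T s g x) \<longlongrightarrow> g x - 0) at_top" by (intro tendsto_intros)
    then have "((\<lambda>s. g x - T s g x) \<longlongrightarrow> g x) at_top" by simp
    moreover have "\<forall>\<^sub>F s in at_top. g x - T s g x = (\<integral>t. T t u x * indicator {0..s} t \<partial>lborel)"
      using eventually_ge_at_top[of "0::real"] by eventually_elim (rule I[symmetric])
    ultimately show ?thesis by (rule Lim_transform_eventually)
  qed
  have lim2: "((\<lambda>s. \<integral>t. T t u x * indicator {0..s} t \<partial>lborel) \<longlongrightarrow>
      (\<integral>t. T t u x * indicator {0..} t \<partial>lborel)) at_top"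
  proof (rule integral_dominated_convergence_at_top[where w="\<lambda>t. exp (- g0 * t) * nrm u * indicator {0..} t"])
    show "(\<lambda>t. T t u x * indicator {0..} t) \<in> borel_measurable lborel"
      using T_meas[OF u x] by measurable
    show "(\<lambda>t. T t u x * indicator {0..s} t) \<in> borel_measurable lborel" for s
      using T_meas[OF u x] by measurable
    show "integrable lborel (\<lambda>t. exp (- g0 * t) * nrm u * indicator {0..} t)"
      using integrable_mult_right[OF exp_int[OF g0(1)], of "nrm u"] by (simp add: ac_simps)
    show "AE t in lborel. ((\<lambda>s. T t u x * indicator {0..s} t) \<longlongrightarrow> T t u x * indicator {0..} t) at_top"
    proof (rule AE_I2)
      fix t :: real
      show "((\<lambda>s. T t u x * indicator {0..s} t) \<longlongrightarrow> T t u x * indicator {0..} t) at_top"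
      proof (rule tendsto_eventually)
        show "\<forall>\<^sub>F s in at_top. T t u x * indicator {0..s} t = T t u x * indicator {0..} t"
          using eventually_ge_at_top[of t] by (auto elim: eventually_mono split: split_indicator)
      qed
    qed
    show "\<forall>\<^sub>F s in at_top. AE t in lborel. norm (T t u x * indicator {0..s} t) \<le> exp (- g0 * t) * nrm u * indicator {0..} t"
    proof (intro always_eventually allI AE_I2)
      fix s t :: real
      show "norm (T t u x * indicator {0..s} t) \<le> exp (- g0 * t) * nrm u * indicator {0..} t"
        using T_abs[OF u x, of t] exp_gt_zero[of "- g0 * t"] nrm_nonneg[OF u]
        by (auto split: split_indicator)
    qed
  qed
  have "(\<integral>t. T t u x * indicator {0..} t \<partial>lborel) = g x"
    using tendsto_unique[OF _ lim2 lim1] by simp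
  then show ?thesis unfolding set_lebesgue_integral_def g_def by (simp add: mult.commute)
qed

end

locale nls3 = nls2 +
  fixes \<beta> :: "'a \<Rightarrow> real"
  assumes bc: "continuous_on K \<beta>" and bpos: "\<And>x. x \<in> K \<Longrightarrow> 0 < \<beta> x"
begin

definition "L = nextgen \<Omega> J dI \<gamma> \<beta>"
definition "CL = nrm \<beta> / g0"

lemma L_eq: "continuous_on K u \<Longrightarrow> x \<in> K \<Longrightarrow> L u x = \<beta> x * Gop u x"
  unfolding L_def nextgen_def T_def[symmetric] by (simp add: T_integral)

lemma L_cont: assumes u: "continuous_on K u" shows "continuous_on K (L u)"
proof -
  have "continuous_on K (\<lambda>x. \<beta> x * Gop u x)" by (intro continuous_intros bc G_cont u)
  then show ?thesis by (rule continuous_on_eq) (simp add: L_eq[OF u])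
qed

lemma L_cong: assumes "\<And>y. y \<in> K \<Longrightarrow> u y = v y" "x \<in> K" shows "L u x = L v x"
proof -
  have "(\<lambda>t. T t u x) = (\<lambda>t. T t v x)" using T_cong[OF assms] by auto
  then show ?thesis unfolding L_def nextgen_def T_def[symmetric] by simp
qed

lemma L_scale: "continuous_on K u \<Longrightarrow> x \<in> K \<Longrightarrow> L (\<lambda>y. c * u y) x = c * L u x"
  using L_eq[of "\<lambda>y. c * u y" x] L_eq[of u x] G_scale[of u x c] by (simp add: continuous_intros)

lemma L_add: "continuous_on K u \<Longrightarrow> continuous_on K v \<Longrightarrow> x \<in> K \<Longrightarrow> L (\<lambda>y. u y + v y) x = L u x + L v x"
  using L_eq[of "\<lambda>y. u y + v y" x] L_eq[of u x] L_eq[of v x] G_add[of u v x]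
  by (simp add: continuous_intros algebra_simps)

lemma L_pos: "continuous_on K u \<Longrightarrow> (\<And>y. y \<in> K \<Longrightarrow> 0 \<le> u y) \<Longrightarrow> x \<in> K \<Longrightarrow> 0 \<le> L u x"
  using L_eq[of u x] G_pos[of u x] bpos[of x] cN(1)
  by (metis (no_types, lifting) divide_nonneg_pos less_eq_real_def mult_nonneg_nonneg order_trans)

lemma G_nrm: assumes u: "continuous_on K u" shows "nrm (Gop u) \<le> nrm u / g0"
proof -
  have "nrm (Gop u) \<le> (\<Sum>k. nrm (\<lambda>y. (M ^^ k) u y / cN ^ Suc k))"
    unfolding Gop_def[abs_def] by (rule ser_nrm[OF Gterm_cont[OF u] Gser_summable[OF u]])
  also have "\<dots> \<le> (\<Sum>k. (qN / cN) ^ k * (nrm u / cN))"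
    using Gterm_nrm[OF u] Gser_summable[OF u] cN
    by (intro suminf_le summable_mult2 summable_geometric) auto
  also have "\<dots> = nrm u / cN / (1 - qN / cN)"
    using cN by (subst suminf_mult2[symmetric]) (auto intro!: summable_geometric simp: suminf_geometric)
  also have "\<dots> = nrm u / g0"
  proof -
    have "1 - qN / cN = g0 / cN" using cN by (simp add: field_simps)
    then show ?thesis using cN g0 by simp
  qed
  finally show ?thesis .
qed

lemma CL_nonneg: "0 \<le> CL" unfolding CL_def using nrm_nonneg[OF bc] g0 by simp

lemma L_bound: assumes u: "continuous_on K u" and x: "x \<in> K" shows "\<bar>L u x\<bar> \<le> CL * nrm u"
proof -
  have "\<bar>L u x\<bar> = \<bar>\<beta> x\<bar> * \<bar>Gop u x\<bar>" using L_eq[OF u x] by (simp add: abs_mult)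
  also have "\<dots> \<le> nrm \<beta> * (nrm u / g0)"
    using nrm_ge[OF bc x] nrm_ge[OF G_cont[OF u] x] G_nrm[OF u] by (intro mult_mono) auto
  finally show ?thesis unfolding CL_def by simp
qed

lemma Lpow_cont: "continuous_on K u \<Longrightarrow> continuous_on K ((L ^^ n) u)"
  by (induction n) (auto intro: L_cont)

lemma Lpow_cong: "(\<And>y. y \<in> K \<Longrightarrow> u y = v y) \<Longrightarrow> x \<in> K \<Longrightarrow> (L ^^ n) u x = (L ^^ n) v x"
proof (induction n arbitrary: x)
  case (Suc n)
  then show ?case by (auto intro!: L_cong)
qed simp

lemma Lpow_scale: assumes u: "continuous_on K u" shows "x \<in> K \<Longrightarrow> (L ^^ n) (\<lambda>y. c * u y) x = c * (L ^^ n) u x"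
proof (induction n arbitrary: x)
  case (Suc n)
  have "(L ^^ Suc n) (\<lambda>y. c * u y) x = L (\<lambda>y. c * (L ^^ n) u y) x"
    using Suc by (auto intro!: L_cong)
  also have "\<dots> = c * (L ^^ Suc n) u x" using L_scale[OF Lpow_cont[OF u] Suc.prems] by simp
  finally show ?case .
qed simp

lemma Lpow_pos: assumes u: "continuous_on K u" and pos: "\<And>y. y \<in> K \<Longrightarrow> 0 \<le> u y"
  shows "x \<in> K \<Longrightarrow> 0 \<le> (L ^^ n) u x"
proof (induction n arbitrary: x)
  case (Suc n)
  then show ?case using L_pos[OF Lpow_cont[OF u]] by simp
qed (use pos in simp)

lemma Lpow_bound: assumes u: "continuous_on K u" shows "nrm ((L ^^ n) u) \<le> CL ^ n * nrm u"
proof (induction n)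
  case (Suc n)
  have "nrm ((L ^^ Suc n) u) \<le> CL * nrm ((L ^^ n) u)"
    by (rule nrm_le) (use L_bound[OF Lpow_cont[OF u]] in simp)
  also have "\<dots> \<le> CL * (CL ^ n * nrm u)" by (rule mult_left_mono[OF Suc CL_nonneg])
  finally show ?case by simp
qed simp

lemma L_sum: fixes N :: nat and f :: "nat \<Rightarrow> 'a \<Rightarrow> real" assumes f: "\<And>k. continuous_on K (f k)" and x: "x \<in> K"
  shows "L (\<lambda>y. \<Sum>k<N. f k y) x = (\<Sum>k<N. L (f k) x)"
proof (induction N)
  case 0
  then show ?case using L_scale[of "\<lambda>_. 0" x 0] x by simp
next
  case (Suc N)
  have "L (\<lambda>y. \<Sum>k<Suc N. f k y) x = L (\<lambda>y. (\<Sum>k<N. f k y) + f N y) x" by simp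
  also have "\<dots> = L (\<lambda>y. \<Sum>k<N. f k y) x + L (f N) x"
    by (rule L_add[OF _ f x]) (intro continuous_intros f)
  finally show ?case using Suc by simp
qed

end

lemma fekete:
  fixes a :: "nat \<Rightarrow> real"
  assumes nn: "\<And>n. 0 \<le> a n" and sub: "\<And>m n. a (m + n) \<le> a m * a n"
  shows "(\<lambda>n. a n powr (1 / real n)) \<longlonglongrightarrow> (INF n\<in>{1..}. a n powr (1 / real n))"
proof -
  define b where "b n = a n powr (1 / real n)" for n
  define r where "r = (INF n\<in>{1..}. b n)"
  have bnn: "0 \<le> b n" for n unfolding b_def by simp
  have bdd: "bdd_below (b ` {1..})" using bnn by (intro bdd_belowI2[where m=0]) auto
  have lower: "r \<le> b n" if "1 \<le> n" for n unfolding r_def using bdd that by (intro cINF_lower) auto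
  have rnn: "0 \<le> r" unfolding r_def using bnn by (intro cINF_greatest) auto
  have "\<forall>e>0. \<exists>no. \<forall>n\<ge>no. norm (b n - r) < e"
  proof (intro allI impI)
    fix e :: real assume e: "0 < e"
    define \<epsilon> where "\<epsilon> = e / 2"
    have \<epsilon>: "0 < \<epsilon>" unfolding \<epsilon>_def using e by simp
    have "r < r + \<epsilon>" using \<epsilon> by simp
    then have "\<exists>m\<in>{1..}. b m < r + \<epsilon>"
      using cINF_less_iff[OF _ bdd, of "r + \<epsilon>"] unfolding r_def by auto
    then obtain m where m: "m \<in> {1..}" "b m < r + \<epsilon>" by blast
    define \<rho> where "\<rho> = r + \<epsilon>"
    have \<rho>: "0 < \<rho>" unfolding \<rho>_def using rnn \<epsilon> by simp
    have m1: "1 \<le> m" using m by simp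
    have am: "a m \<le> \<rho> ^ m"
    proof (cases "a m = 0")
      case True then show ?thesis using \<rho> by simp
    next
      case False
      then have apos: "0 < a m" using nn[of m] by simp
      then have bpos: "0 < b m" unfolding b_def by simp
      have "a m = (a m powr (1 / real m)) powr real m"
        using m1 apos by (simp add: powr_powr)
      also have "\<dots> = b m ^ m" unfolding b_def[symmetric] using bpos by (simp add: powr_realpow)
      also have "\<dots> \<le> \<rho> ^ m" using m(2) bnn unfolding \<rho>_def by (intro power_mono) auto
      finally show ?thesis .
    qed
    have qs: "a (q * m + s) \<le> a m ^ q * a s" for q s
    proof (induction q)
      case (Suc q)
      have "a (Suc q * m + s) = a (m + (q * m + s))" by (simp add: algebra_simps)
      also have "\<dots> \<le> a m * a (q * m + s)" by (rule sub)
      also have "\<dots> \<le> a m * (a m ^ q * a s)" by (rule mult_left_mono[OF Suc nn])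
      finally show ?case by (simp add: algebra_simps)
    qed simp
    define C where "C = (\<Sum>s<m. a s) + 1"
    have C: "a s \<le> C" if "s < m" for s
    proof -
      have "a s \<le> (\<Sum>s<m. a s)" using that nn by (intro member_le_sum) auto
      then show ?thesis unfolding C_def by simp
    qed
    have C1: "1 \<le> C" unfolding C_def using nn by (simp add: sum_nonneg)
    define C' where "C' = C * (1 + 1 / \<rho> ^ m)"
    have C'pos: "0 < C'" unfolding C'_def using C1 \<rho> by (simp add: add_pos_pos)
    have an: "a n \<le> C' * \<rho> ^ n" for n
    proof -
      define q where "q = n div m"
      define s where "s = n mod m"
      have n: "n = q * m + s" unfolding q_def s_def by simp
      have s: "s < m" unfolding s_def using m1 by simp
      have "a n \<le> a m ^ q * a s" unfolding n by (rule qs)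
      also have "\<dots> \<le> (\<rho> ^ m) ^ q * C"
        using am C[OF s] nn \<rho> by (intro mult_mono power_mono) auto
      also have "\<dots> = \<rho> ^ (q * m) * C" by (simp add: power_mult mult.commute)
      also have "\<rho> ^ (q * m) \<le> \<rho> ^ n * (1 + 1 / \<rho> ^ m)"
      proof (cases "1 \<le> \<rho>")
        case True
        have "\<rho> ^ (q * m) \<le> \<rho> ^ n" unfolding n using True by (intro power_increasing) auto
        also have "\<dots> \<le> \<rho> ^ n * (1 + 1 / \<rho> ^ m)" using \<rho> by simp
        finally show ?thesis .
      next
        case False
        have "\<rho> ^ m \<le> \<rho> ^ s" using False \<rho> s by (intro power_decreasing) auto
        then have "\<rho> ^ (q * m) * \<rho> ^ m \<le> \<rho> ^ (q * m) * \<rho> ^ s" using \<rho> by (intro mult_left_mono) auto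
        also have "\<dots> = \<rho> ^ n" unfolding n by (simp add: power_add)
        finally have "\<rho> ^ (q * m) \<le> \<rho> ^ n / \<rho> ^ m" using \<rho> by (simp add: field_simps)
        also have "\<dots> \<le> \<rho> ^ n * (1 + 1 / \<rho> ^ m)" using \<rho> by (simp add: field_simps)
        finally show ?thesis .
      qed
      then have "\<rho> ^ (q * m) * C \<le> \<rho> ^ n * (1 + 1 / \<rho> ^ m) * C" using C1 by (intro mult_right_mono) auto
      finally show ?thesis unfolding C'_def by (simp add: ac_simps)
    qed
    have bn: "b n \<le> C' powr (1 / real n) * \<rho>" if "1 \<le> n" for n
    proof -
      have "b n \<le> (C' * \<rho> ^ n) powr (1 / real n)" unfolding b_def
        using an[of n] nn[of n] by (intro powr_mono2) auto
      also have "\<dots> = C' powr (1 / real n) * (\<rho> ^ n) powr (1 / real n)"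
        using C'pos \<rho> by (simp add: powr_mult)
      also have "(\<rho> ^ n) powr (1 / real n) = \<rho>"
        using \<rho> that by (simp add: powr_realpow[symmetric] powr_powr)
      finally show ?thesis by simp
    qed
    have "(\<lambda>n. C' powr (1 / real n)) \<longlonglongrightarrow> C' powr 0"
      by (intro tendsto_intros lim_const_over_n) (use C'pos in auto)
    then have "(\<lambda>n. C' powr (1 / real n)) \<longlonglongrightarrow> 1" using C'pos by simp
    moreover have "1 < 1 + \<epsilon> / \<rho>" using \<epsilon> \<rho> by simp
    ultimately have "\<forall>\<^sub>F n in sequentially. C' powr (1 / real n) < 1 + \<epsilon> / \<rho>"
      by (rule order_tendstoD)
    then obtain N where N: "\<And>n. n \<ge> N \<Longrightarrow> C' powr (1 / real n) < 1 + \<epsilon> / \<rho>"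
      by (auto simp: eventually_sequentially)
    show "\<exists>no. \<forall>n\<ge>no. norm (b n - r) < e"
    proof (intro exI allI impI)
      fix n assume "max 1 N \<le> n"
      then have n1: "1 \<le> n" and nN: "N \<le> n" by auto
      have "b n \<le> C' powr (1 / real n) * \<rho>" by (rule bn[OF n1])
      also have "\<dots> < (1 + \<epsilon> / \<rho>) * \<rho>" using N[OF nN] \<rho> by (intro mult_strict_right_mono) auto
      also have "\<dots> = r + e" unfolding \<rho>_def \<epsilon>_def using \<rho> \<epsilon>_def \<rho>_def by (simp add: field_simps)
      finally show "norm (b n - r) < e" using lower[OF n1] by simp
    qed
  qed
  then show ?thesis unfolding b_def[symmetric] r_def[symmetric] by (simp add: LIMSEQ_iff)
qed

context nls3 begin

definition "Bset = {\<phi> :: 'a \<Rightarrow> real. continuous_on K \<phi> \<and> (\<forall>x\<in>K. \<bar>\<phi> x\<bar> \<le> 1)}"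
definition "an n = opnorm_on K (L ^^ n)"

lemma an_def2: "an n = (SUP \<phi>\<in>Bset. (SUP x\<in>K. \<bar>(L ^^ n) \<phi> x\<bar>))"
  unfolding an_def opnorm_on_def Bset_def ..

lemma Bset_nrm: "\<phi> \<in> Bset \<Longrightarrow> nrm \<phi> \<le> 1"
  unfolding Bset_def by (auto intro: nrm_le)

lemma inner_le: assumes "\<phi> \<in> Bset" "x \<in> K" shows "\<bar>(L ^^ n) \<phi> x\<bar> \<le> CL ^ n"
proof -
  have c: "continuous_on K \<phi>" using assms(1) unfolding Bset_def by simp
  have "\<bar>(L ^^ n) \<phi> x\<bar> \<le> nrm ((L ^^ n) \<phi>)" by (rule nrm_ge[OF Lpow_cont[OF c] assms(2)])
  also have "\<dots> \<le> CL ^ n * nrm \<phi>" by (rule Lpow_bound[OF c])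
  also have "\<dots> \<le> CL ^ n * 1" using Bset_nrm[OF assms(1)] CL_nonneg by (intro mult_left_mono) auto
  finally show ?thesis by simp
qed

lemma inner_bdd: "\<phi> \<in> Bset \<Longrightarrow> bdd_above ((\<lambda>x. \<bar>(L ^^ n) \<phi> x\<bar>) ` K)"
  by (rule bdd_aboveI2[where M="CL ^ n"]) (rule inner_le)

lemma inner_sup_le: "\<phi> \<in> Bset \<Longrightarrow> (SUP x\<in>K. \<bar>(L ^^ n) \<phi> x\<bar>) \<le> CL ^ n"
  using inner_le Kne by (intro cSUP_least) auto

lemma Bset_ne: "(\<lambda>_. 0) \<in> Bset" unfolding Bset_def by simp

lemma outer_bdd: "bdd_above ((\<lambda>\<phi>. SUP x\<in>K. \<bar>(L ^^ n) \<phi> x\<bar>) ` Bset)"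
  by (rule bdd_aboveI2[where M="CL ^ n"]) (rule inner_sup_le)

lemma an_ge: assumes "\<phi> \<in> Bset" "x \<in> K" shows "\<bar>(L ^^ n) \<phi> x\<bar> \<le> an n"
proof -
  have "\<bar>(L ^^ n) \<phi> x\<bar> \<le> (SUP x\<in>K. \<bar>(L ^^ n) \<phi> x\<bar>)"
    by (rule cSUP_upper[OF assms(2) inner_bdd[OF assms(1)]])
  also have "\<dots> \<le> an n" unfolding an_def2 by (rule cSUP_upper[OF assms(1) outer_bdd])
  finally show ?thesis .
qed

lemma an_nonneg: "0 \<le> an n"
proof -
  obtain x where "x \<in> K" using Kne by (meson ex_in_conv)
  then show ?thesis using an_ge[OF Bset_ne] by (meson abs_ge_zero order_trans)
qed

lemma an_bound: assumes c: "continuous_on K \<phi>" and x: "x \<in> K"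
  shows "\<bar>(L ^^ n) \<phi> x\<bar> \<le> an n * nrm \<phi>"
proof (cases "nrm \<phi> = 0")
  case True
  have z: "\<phi> y = 0 * \<phi> y" if "y \<in> K" for y using nrm_ge[OF c that] True by simp
  have "(L ^^ n) \<phi> x = (L ^^ n) (\<lambda>y. 0 * \<phi> y) x" by (rule Lpow_cong[OF z x])
  also have "\<dots> = 0" using Lpow_scale[OF c x, of n 0] by simp
  finally show ?thesis using True by simp
next
  case False
  define N where "N = nrm \<phi>"
  have N: "0 < N" using False nrm_nonneg[OF c] unfolding N_def by simp
  define \<psi> where "\<psi> y = \<phi> y / N" for y
  have \<psi>c: "continuous_on K \<psi>" unfolding \<psi>_def[abs_def] using c N by (intro continuous_intros) auto
  have \<psi>B: "\<psi> \<in> Bset" unfolding Bset_def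
  proof (intro CollectI conjI ballI \<psi>c)
    fix y assume "y \<in> K"
    then show "\<bar>\<psi> y\<bar> \<le> 1" unfolding \<psi>_def using nrm_ge[OF c \<open>y \<in> K\<close>] N unfolding N_def
      by (simp add: divide_le_eq_1 abs_divide)
  qed
  have eq: "\<phi> = (\<lambda>y. N * \<psi> y)" unfolding \<psi>_def using N by auto
  have "(L ^^ n) \<phi> x = N * (L ^^ n) \<psi> x" unfolding eq by (rule Lpow_scale[OF \<psi>c x])
  then have "\<bar>(L ^^ n) \<phi> x\<bar> = N * \<bar>(L ^^ n) \<psi> x\<bar>" using N by (simp add: abs_mult)
  also have "\<dots> \<le> N * an n" using an_ge[OF \<psi>B x] N by simp
  finally show ?thesis unfolding N_def by (simp add: mult.commute)
qed

lemma an_sub: "an (m + n) \<le> an m * an n"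
  unfolding an_def2[of "m + n"]
proof (rule cSUP_least[OF _ cSUP_least])
  show "Bset \<noteq> {}" using Bset_ne by blast
  show "K \<noteq> {}" by (rule Kne)
  fix \<phi> x assume \<phi>: "\<phi> \<in> Bset" and x: "x \<in> K"
  have c: "continuous_on K \<phi>" using \<phi> unfolding Bset_def by simp
  have "\<bar>(L ^^ (m + n)) \<phi> x\<bar> = \<bar>(L ^^ m) ((L ^^ n) \<phi>) x\<bar>" by (simp add: funpow_add)
  also have "\<dots> \<le> an m * nrm ((L ^^ n) \<phi>)" by (rule an_bound[OF Lpow_cont[OF c] x])
  also have "\<dots> \<le> an m * an n"
  proof (rule mult_left_mono[OF _ an_nonneg])
    show "nrm ((L ^^ n) \<phi>) \<le> an n"
    proof (rule nrm_le)
      fix y assume "y \<in> K"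
      then show "\<bar>(L ^^ n) \<phi> y\<bar> \<le> an n" by (rule an_ge[OF \<phi>])
    qed
  qed
  finally show "\<bar>(L ^^ (m + n)) \<phi> x\<bar> \<le> an m * an n" .
qed

lemma R0_eq: "R0 \<Omega> J dI \<gamma> \<beta> = lim (\<lambda>n. an n powr (1 / real n))"
  unfolding R0_def spectral_radius_on_def an_def L_def ..

lemma small_an: assumes R: "R0 \<Omega> J dI \<gamma> \<beta> < 1" shows "\<exists>N\<ge>1. an N \<le> 1 / 2"
proof -
  have lim: "(\<lambda>n. an n powr (1 / real n)) \<longlonglongrightarrow> (INF n\<in>{1..}. an n powr (1 / real n))"
    by (rule fekete[OF an_nonneg an_sub])
  then have "(INF n\<in>{1..}. an n powr (1 / real n)) < 1"
    using R unfolding R0_eq by (simp add: limI)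
  moreover have "bdd_below ((\<lambda>n. an n powr (1 / real n)) ` {1..})"
    by (intro bdd_belowI2[where m=0]) auto
  ultimately obtain m where m: "1 \<le> m" "an m powr (1 / real m) < 1"
    using cINF_less_iff[of "{1..}" "\<lambda>n. an n powr (1 / real n)" 1] by auto
  have am: "an m < 1"
  proof (cases "an m = 0")
    case False
    then have "0 < an m" using an_nonneg[of m] by simp
    then have "an m = (an m powr (1 / real m)) powr real m" using m(1) by (simp add: powr_powr)
    also have "\<dots> = (an m powr (1 / real m)) ^ m" using \<open>0 < an m\<close> by (simp add: powr_realpow)
    also have "\<dots> < 1 ^ m" using m \<open>0 < an m\<close> by (intro power_strict_mono) auto
    finally show ?thesis by simp
  qed simp
  have pw: "an (Suc q * m) \<le> an m ^ Suc q" for q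
  proof (induction q)
    case (Suc q)
    have "an (Suc (Suc q) * m) = an (m + Suc q * m)" by (simp add: algebra_simps)
    also have "\<dots> \<le> an m * an (Suc q * m)" by (rule an_sub)
    also have "\<dots> \<le> an m * an m ^ Suc q" by (rule mult_left_mono[OF Suc an_nonneg])
    finally show ?case by simp
  qed simp
  have "(\<lambda>q. an m ^ Suc q) \<longlonglongrightarrow> 0"
    using LIMSEQ_power_zero[of "an m"] am an_nonneg[of m] by (intro LIMSEQ_Suc) auto
  then have "\<forall>\<^sub>F q in sequentially. an m ^ Suc q < 1 / 2" by (rule order_tendstoD) simp
  then obtain q where "an m ^ Suc q < 1 / 2" by (auto simp: eventually_sequentially)
  then have "an (Suc q * m) \<le> 1 / 2" using pw[of q] by simp
  moreover have "1 \<le> Suc q * m" using m(1) by simp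
  ultimately show ?thesis by blast
qed

lemma super:
  assumes R: "R0 \<Omega> J dI \<gamma> \<beta> < 1"
  shows "\<exists>w. continuous_on K w \<and> (\<forall>x\<in>K. 1 / cN \<le> w x)
     \<and> (\<forall>x\<in>K. dI * Kop w x + (- dI - \<gamma> x + \<beta> x) * w x \<le> - 1 / 2)"
proof -
  obtain N where N: "1 \<le> N" "an N \<le> 1 / 2" using small_an[OF R] by blast
  define one where "one = (\<lambda>_::'a. 1::real)"
  have onec: "continuous_on K one" unfolding one_def by simp
  have onen: "nrm one \<le> 1" unfolding one_def by (rule nrm_le) simp
  define \<phi> where "\<phi> y = (\<Sum>k<N. (L ^^ k) one y)" for y
  have \<phi>c: "continuous_on K \<phi>" unfolding \<phi>_def[abs_def]
    by (intro continuous_intros Lpow_cont onec)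
  have \<phi>1: "1 \<le> \<phi> x" if "x \<in> K" for x
  proof -
    have "\<phi> x = one x + (\<Sum>k<N - 1. (L ^^ Suc k) one x)"
      unfolding \<phi>_def using N(1) sum.lessThan_Suc_shift[of "\<lambda>k. (L ^^ k) one x" "N - 1"] by simp
    moreover have "0 \<le> (\<Sum>k<N - 1. (L ^^ Suc k) one x)"
      by (intro sum_nonneg Lpow_pos[OF onec _ that]) (simp add: one_def)
    ultimately show ?thesis by (simp add: one_def)
  qed
  define w where "w = Gop \<phi>"
  have wc: "continuous_on K w" unfolding w_def by (rule G_cont[OF \<phi>c])
  have w1: "1 / cN \<le> w x" if "x \<in> K" for x
  proof -
    have "\<phi> x / cN \<le> w x" unfolding w_def
    proof (rule G_pos[OF \<phi>c _ that])
      fix y assume "y \<in> K" then show "0 \<le> \<phi> y" using \<phi>1[of y] by simp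
    qed
    moreover have "1 / cN \<le> \<phi> x / cN" using \<phi>1[OF that] cN(1) by (intro divide_right_mono) auto
    ultimately show ?thesis by simp
  qed
  have ineq: "dI * Kop w x + (- dI - \<gamma> x + \<beta> x) * w x \<le> - 1 / 2" if x: "x \<in> K" for x
  proof -
    have Aw: "A w x = - \<phi> x" unfolding w_def by (rule G_eq[OF \<phi>c x])
    have "\<beta> x * w x = L \<phi> x" unfolding w_def using L_eq[OF \<phi>c x] by simp
    also have "\<dots> = (\<Sum>k<N. L ((L ^^ k) one) x)"
      unfolding \<phi>_def[abs_def] by (rule L_sum[OF Lpow_cont[OF onec] x])
    also have "\<dots> = (\<Sum>k<N. (L ^^ Suc k) one x)" by simp
    also have "\<dots> = \<phi> x - 1 + (L ^^ N) one x"
    proof -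
      have "(\<Sum>k<Suc N. (L ^^ k) one x) = one x + (\<Sum>k<N. (L ^^ Suc k) one x)"
        using sum.lessThan_Suc_shift[of "\<lambda>k. (L ^^ k) one x" N] by simp
      then show ?thesis unfolding \<phi>_def by (simp add: one_def)
    qed
    finally have bw: "\<beta> x * w x = \<phi> x - 1 + (L ^^ N) one x" .
    have "(L ^^ N) one x \<le> an N * nrm one" using an_bound[OF onec x, of N] by simp
    also have "\<dots> \<le> an N * 1" by (rule mult_left_mono[OF onen an_nonneg])
    finally have LN: "(L ^^ N) one x \<le> 1 / 2" using N(2) by simp
    have "dI * Kop w x + (- dI - \<gamma> x + \<beta> x) * w x = A w x + \<beta> x * w x"
      unfolding A_def Pop_def pA_def by (simp add: algebra_simps)
    also have "\<dots> = -1 + (L ^^ N) one x" unfolding Aw bw by simp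
    finally show ?thesis using LN by simp
  qed
  show ?thesis using wc w1 ineq by blast
qed

end

lemma incid_eq: "0 \<le> s \<Longrightarrow> 0 \<le> i \<Longrightarrow> incid s i = s * i / (s + i)"
  unfolding incid_def by auto

lemma incid_bounds: "0 \<le> s \<Longrightarrow> 0 \<le> i \<Longrightarrow> 0 \<le> incid s i \<and> incid s i \<le> i"
proof -
  assume s: "0 \<le> s" and i: "0 \<le> i"
  show ?thesis
  proof (cases "s + i = 0")
    case True then show ?thesis using s i incid_eq[OF s i] by simp
  next
    case False
    then have p: "0 < s + i" using s i by simp
    have "s * i \<le> i * (s + i)" using s i by (simp add: algebra_simps)
    then show ?thesis using incid_eq[OF s i] p s i by (simp add: divide_le_eq)
  qed
qed

lemma incid_cont: "continuous_on {p. 0 \<le> fst p \<and> 0 \<le> snd p} (\<lambda>p. incid (fst p) (snd p))"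
proof -
  define Q where "Q = {p :: real \<times> real. 0 \<le> fst p \<and> 0 \<le> snd p}"
  define h where "h p = fst p * snd p / (fst p + snd p)" for p :: "real \<times> real"
  have eq: "incid (fst p) (snd p) = h p" if "p \<in> Q" for p
    using that incid_eq unfolding Q_def h_def by auto
  have "continuous_on Q h"
  proof (rule continuous_on_eq_continuous_within[THEN iffD2], intro ballI)
    fix p assume p: "p \<in> Q"
    show "continuous (at p within Q) h"
    proof (cases "p = (0, 0)")
      case False
      then have "fst p + snd p \<noteq> 0" using p unfolding Q_def by (cases p) auto
      then have "isCont h p" unfolding h_def by (intro continuous_intros) auto
      then show ?thesis by (rule continuous_at_imp_continuous_within)
    next
      case True
      have "(h \<longlongrightarrow> 0) (at p within Q)"
      proof (rule Lim_null_comparison)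
        show "\<forall>\<^sub>F q in at p within Q. norm (h q) \<le> norm q"
          unfolding eventually_at_filter
        proof (intro always_eventually allI impI)
          fix q :: "real \<times> real" assume "q \<noteq> p" "q \<in> Q"
          then have q: "0 \<le> fst q" "0 \<le> snd q" unfolding Q_def by auto
          have "norm (h q) = incid (fst q) (snd q)" using eq[OF \<open>q \<in> Q\<close>] incid_bounds[OF q] by simp
          also have "\<dots> \<le> snd q" using incid_bounds[OF q] by simp
          also have "\<dots> \<le> norm q"
          proof -
            have "snd q \<le> norm (snd q)" by simp
            also have "\<dots> \<le> norm (fst q, snd q)" by (rule norm_snd_le)
            finally show ?thesis by simp
          qed
          finally show "norm (h q) \<le> norm q" .
        qed
        show "((\<lambda>q. norm q) \<longlongrightarrow> 0) (at p within Q)"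
          using True tendsto_ident_at[of "(0::real, 0::real)" Q]
          by (intro tendsto_norm_zero) (simp add: zero_prod_def)
      qed
      moreover have "h p = 0" using True unfolding h_def by simp
      ultimately show ?thesis unfolding continuous_within by simp
    qed
  qed
  then show ?thesis unfolding Q_def[symmetric] by (rule continuous_on_eq) (use eq in auto)
qed

context nls begin

lemma extend_deriv2:
  fixes f D :: "'a \<Rightarrow> real \<Rightarrow> real"
  assumes fc: "\<And>Tm. continuous_on (K \<times> {0..Tm}) (\<lambda>(x, t). f x t)"
    and Dc: "\<And>Tm. continuous_on (K \<times> {0..Tm}) (\<lambda>(x, t). D x t)"
    and der: "\<And>x t. x \<in> \<Omega> \<Longrightarrow> 0 < t \<Longrightarrow> (f x has_real_derivative D x t) (at t)"
    and x: "x \<in> K" and t: "0 < t"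
  shows "(f x has_real_derivative D x t) (at t)"
proof -
  have fx: "continuous_on {0..Tm} (f y)" if "y \<in> K" for y Tm
  proof -
    have "continuous_on {0..Tm} (\<lambda>s. (\<lambda>(x, t). f x t) (y, s))"
      by (rule continuous_on_compose2[OF fc]) (use that in \<open>auto intro!: continuous_intros\<close>)
    then show ?thesis by simp
  qed
  have Dx: "continuous_on {0..Tm} (D y)" if "y \<in> K" for y Tm
  proof -
    have "continuous_on {0..Tm} (\<lambda>s. (\<lambda>(x, t). D x t) (y, s))"
      by (rule continuous_on_compose2[OF Dc]) (use that in \<open>auto intro!: continuous_intros\<close>)
    then show ?thesis by simp
  qed
  have eq: "f y s = f y 0 + integral {0..s} (D y)" if s: "0 \<le> s" and y: "y \<in> K" for s y
  proof -
    define F where "F y = f y s - f y 0 - integral {0..s} (D y)" for y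
    have Fc: "continuous_on K F"
    proof -
      have c1: "continuous_on K (\<lambda>y. f y s)"
      proof -
        have "continuous_on K (\<lambda>y. (\<lambda>(x, t). f x t) (y, s))"
          by (rule continuous_on_compose2[OF fc[of s]]) (use s in \<open>auto intro!: continuous_intros\<close>)
        then show ?thesis by simp
      qed
      have c0: "continuous_on K (\<lambda>y. f y 0)"
      proof -
        have "continuous_on K (\<lambda>y. (\<lambda>(x, t). f x t) (y, 0))"
          by (rule continuous_on_compose2[OF fc[of s]]) (use s in \<open>auto intro!: continuous_intros\<close>)
        then show ?thesis by simp
      qed
      have ci: "continuous_on K (\<lambda>y. integral (cbox 0 s) (D y))"
        by (rule integral_continuous_on_param) (use Dc[of s] in simp)
      show ?thesis unfolding F_def using c1 c0 ci by (intro continuous_intros) auto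
    qed
    have F0: "F y = 0" if "y \<in> \<Omega>" for y
    proof -
      have "(D y has_integral (f y s - f y 0)) {0..s}"
      proof (rule fundamental_theorem_of_calculus_interior[OF s])
        show "continuous_on {0..s} (f y)" using fx OmK that by auto
        show "(f y has_vector_derivative D y r) (at r)" if "r \<in> {0<..<s}" for r
          using der[of y r] that \<open>y \<in> \<Omega>\<close> by (simp add: has_real_derivative_iff_has_vector_derivative)
      qed
      then show ?thesis unfolding F_def by (simp add: integral_unique)
    qed
    have "closed {y \<in> K. F y = 0}"
      by (rule continuous_closed_preimage_constant[OF Fc]) simp
    moreover have "\<Omega> \<subseteq> {y \<in> K. F y = 0}" using F0 OmK by auto
    ultimately have "K \<subseteq> {y \<in> K. F y = 0}" by (rule closure_minimal[rotated])
    then show ?thesis using y unfolding F_def by auto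
  qed
  define G where "G s = f x 0 + integral {0..s} (D x)" for s
  have "(G has_vector_derivative D x t) (at t within {0..t+1})"
  proof -
    have "((\<lambda>u. integral {0..u} (D x)) has_vector_derivative D x t) (at t within {0..t+1})"
      by (rule integral_has_vector_derivative) (use Dx[OF x, of "t+1"] t in auto)
    from has_vector_derivative_add[OF has_vector_derivative_const[of "f x 0"] this]
    show ?thesis unfolding G_def by (metis add_0)
  qed
  moreover have "at t within {0..t+1} = at t" by (rule at_within_Icc_at) (use t in auto)
  ultimately have "(G has_real_derivative D x t) (at t)"
    by (simp add: has_real_derivative_iff_has_vector_derivative)
  then show ?thesis
  proof (rule has_field_derivative_transform_within_open[where S="{0<..<t+1}"])
    fix s assume "s \<in> {0<..<t+1}"
    then have "0 \<le> s" by simp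
    from eq[OF this x] show "G s = f x s" unfolding G_def by simp
  qed (use t in auto)
qed

lemma Kop_joint:
  fixes f :: "'a \<Rightarrow> real \<Rightarrow> real"
  assumes fc: "continuous_on (K \<times> {0..Tm}) (\<lambda>(x, t). f x t)"
  shows "continuous_on (K \<times> {0..Tm}) (\<lambda>(x, t). Kop (\<lambda>y. f y t) x)"
proof -
  have "continuous_on (K \<times> {0..Tm}) (\<lambda>p. LINT y:\<Omega>|lborel. J (fst p - y) * f y (snd p))"
  proof (rule param_cont)
    show "compact (K \<times> {0..Tm})" by (intro compact_Times Kcompact compact_Icc)
    have 1: "continuous_on ((K \<times> {0..Tm}) \<times> K) (\<lambda>z. J (fst (fst z) - snd z))"
      by (rule continuous_on_compose2[OF Jcont]) (auto intro!: continuous_intros)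
    have 2: "continuous_on ((K \<times> {0..Tm}) \<times> K) (\<lambda>z. (\<lambda>(x, t). f x t) (snd z, snd (fst z)))"
      by (rule continuous_on_compose2[OF fc]) (auto intro!: continuous_intros)
    show "continuous_on ((K \<times> {0..Tm}) \<times> K) (\<lambda>(p, y). J (fst p - y) * f y (snd p))"
      using continuous_on_mult[OF 1 2] by (simp add: case_prod_unfold)
  qed
  then show ?thesis unfolding Kop_def by (simp add: case_prod_unfold)
qed

lemma zero_on_K:
  fixes F :: "'a \<Rightarrow> real"
  assumes "continuous_on K F" "\<And>x. x \<in> \<Omega> \<Longrightarrow> F x = 0" "x \<in> K"
  shows "F x = 0"
proof -
  have "closed {y \<in> K. F y = 0}"
    by (rule continuous_closed_preimage_constant[OF assms(1)]) simp
  moreover have "\<Omega> \<subseteq> {y \<in> K. F y = 0}" using assms(2) OmK by auto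
  ultimately have "K \<subseteq> {y \<in> K. F y = 0}" by (rule closure_minimal[rotated])
  then show ?thesis using assms(3) by auto
qed

lemma min_pos:
  fixes F :: "'a \<Rightarrow> real"
  assumes "continuous_on K F" "\<And>x. x \<in> K \<Longrightarrow> 0 < F x"
  shows "\<exists>m>0. \<forall>x\<in>K. m \<le> F x"
proof -
  obtain x0 where "x0 \<in> K" "\<And>y. y \<in> K \<Longrightarrow> F x0 \<le> F y"
    using continuous_attains_inf[OF Kcompact Kne assms(1)] by blast
  then show ?thesis using assms(2) by blast
qed

lemma cont_slice:
  fixes f :: "'a \<Rightarrow> real \<Rightarrow> real"
  assumes "continuous_on (K \<times> {0..}) (\<lambda>(x, t). f x t)" "0 \<le> t"
  shows "continuous_on K (\<lambda>y. f y t)"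
proof -
  have "continuous_on K (\<lambda>y. (\<lambda>(x, t). f x t) (y, t))"
    by (rule continuous_on_compose2[OF assms(1)]) (use assms(2) in \<open>auto intro!: continuous_intros\<close>)
  then show ?thesis by simp
qed

end

theorem theorem3p4:
  fixes \<Omega> :: "'a::euclidean_space set"
    and J \<Lambda> \<beta> \<gamma> S0 I0 Sstar :: "'a \<Rightarrow> real"
    and dS dI :: real
    and S I :: "'a \<Rightarrow> real \<Rightarrow> real"
  assumes dom: "open \<Omega>" "connected \<Omega>" "bounded \<Omega>" "\<Omega> \<noteq> {}"
    and diff: "dS > 0" "dI > 0"
    and coeff: "continuous_on (closure \<Omega>) \<Lambda>" "continuous_on (closure \<Omega>) \<beta>"
      "continuous_on (closure \<Omega>) \<gamma>"
      "\<forall>x\<in>closure \<Omega>. \<Lambda> x > 0 \<and> \<beta> x > 0 \<and> \<gamma> x > 0"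
    and kernel: "continuous_on UNIV J" "J 0 > 0" "\<forall>x. J x = J (- x) \<and> J x \<ge> 0"
      "integrable lborel J" "(LINT x|lborel. J x) = 1"
      "\<exists>x\<in>closure \<Omega>. (LINT y:\<Omega>|lborel. J (x - y)) \<noteq> 1"
    and init: "continuous_on (closure \<Omega>) S0" "continuous_on (closure \<Omega>) I0"
      "\<forall>x\<in>closure \<Omega>. S0 x \<ge> 0 \<and> I0 x \<ge> 0"
      "(LINT x:\<Omega>|lborel. I0 x) > 0"
    and Sstar: "continuous_on (closure \<Omega>) Sstar" "\<forall>x\<in>closure \<Omega>. Sstar x > 0"
      "\<forall>x\<in>\<Omega>. dS * (LINT y|lborel. J (x - y) * (indicator \<Omega> y * Sstar y - Sstar x))
                 + \<Lambda> x = 0"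
    and sol_cont: "continuous_on (closure \<Omega> \<times> {0..}) (\<lambda>(x, t). S x t)"
      "continuous_on (closure \<Omega> \<times> {0..}) (\<lambda>(x, t). I x t)"
    and sol_nonneg: "\<forall>x\<in>closure \<Omega>. \<forall>t\<ge>0. S x t \<ge> 0 \<and> I x t \<ge> 0"
    and sol_init: "\<forall>x\<in>closure \<Omega>. S x 0 = S0 x \<and> I x 0 = I0 x"
    and sol_S: "\<forall>x\<in>\<Omega>. \<forall>t>0. ((S x) has_real_derivative
        (dS * (LINT y|lborel. J (x - y) * (indicator \<Omega> y * S y t - S x t))
         + \<Lambda> x - \<beta> x * incid (S x t) (I x t) + \<gamma> x * I x t)) (at t)"
    and sol_I: "\<forall>x\<in>\<Omega>. \<forall>t>0. ((I x) has_real_derivative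
        (dI * (LINT y|lborel. J (x - y) * (indicator \<Omega> y * I y t - I x t))
         + \<beta> x * incid (S x t) (I x t) - \<gamma> x * I x t)) (at t)"
    and R0: "R0 \<Omega> J dI \<gamma> \<beta> < 1"
  shows "uniform_limit (closure \<Omega>) (\<lambda>t x. S x t) Sstar at_top
       \<and> uniform_limit (closure \<Omega>) (\<lambda>t x. I x t) (\<lambda>x. 0) at_top"
proof -
  interpret nls3 \<Omega> J dI \<gamma> \<beta>
  proof (unfold_locales)
    show "\<And>x. 0 \<le> J x" "\<And>x. J x = J (- x)" using kernel(3) by auto
    show "\<And>x. x \<in> closure \<Omega> \<Longrightarrow> 0 < \<gamma> x" "\<And>x. x \<in> closure \<Omega> \<Longrightarrow> 0 < \<beta> x"
      using coeff(4) by auto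
  qed (use dom diff coeff kernel in auto)
  obtain w where wc: "continuous_on K w" and w1: "\<And>x. x \<in> K \<Longrightarrow> 1 / cN \<le> w x"
    and wineq: "\<And>x. x \<in> K \<Longrightarrow> dI * Kop w x + (- dI - \<gamma> x + \<beta> x) * w x \<le> - 1 / 2"
    using super[OF R0] by blast
  have Sc: "continuous_on K (\<lambda>y. S y t)" if "0 \<le> t" for t by (rule cont_slice[OF sol_cont(1) that])
  have Ic: "continuous_on K (\<lambda>y. I y t)" if "0 \<le> t" for t by (rule cont_slice[OF sol_cont(2) that])
  have SW: "continuous_on (K \<times> {0..Tm}) (\<lambda>(x, t). S x t)" for Tm
    by (rule continuous_on_subset[OF sol_cont(1)]) auto
  have IW: "continuous_on (K \<times> {0..Tm}) (\<lambda>(x, t). I x t)" for Tm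
    by (rule continuous_on_subset[OF sol_cont(2)]) auto
  have incW: "continuous_on (K \<times> {0..Tm}) (\<lambda>(x, t). incid (S x t) (I x t))" for Tm
  proof -
    have "continuous_on (K \<times> {0..Tm}) (\<lambda>z. (\<lambda>p. incid (fst p) (snd p)) ((\<lambda>(x, t). (S x t, I x t)) z))"
    proof (rule continuous_on_compose2[OF incid_cont])
      show "continuous_on (K \<times> {0..Tm}) (\<lambda>(x, t). (S x t, I x t))"
        using SW IW by (auto simp: case_prod_unfold intro!: continuous_intros)
      show "(\<lambda>(x, t). (S x t, I x t)) ` (K \<times> {0..Tm}) \<subseteq> {p. 0 \<le> fst p \<and> 0 \<le> snd p}"
        using sol_nonneg by auto
    qed
    then show ?thesis by (simp add: case_prod_unfold)
  qed
  have fstc: "continuous_on (K \<times> {0..Tm}) (\<lambda>(x, t). f x)" if "continuous_on K f" for f :: "'a \<Rightarrow> real" and Tm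
  proof -
    have "continuous_on (K \<times> {0..Tm}) (\<lambda>z. f (fst z))"
      by (rule continuous_on_compose2[OF that]) (auto intro!: continuous_intros)
    then show ?thesis by (simp add: case_prod_unfold)
  qed
  define DI where "DI x t = dI * (Kop (\<lambda>y. I y t) x - I x t) + \<beta> x * incid (S x t) (I x t) - \<gamma> x * I x t" for x t
  define DS where "DS x t = dS * (Kop (\<lambda>y. S y t) x - S x t) + \<Lambda> x - \<beta> x * incid (S x t) (I x t) + \<gamma> x * I x t" for x t
  have DIc: "continuous_on (K \<times> {0..Tm}) (\<lambda>(x, t). DI x t)" for Tm
    unfolding DI_def using Kop_joint[OF IW[of Tm]] IW[of Tm] incW[of Tm] fstc[OF coeff(2), of Tm] fstc[OF coeff(3), of Tm]
    by (auto simp: case_prod_unfold intro!: continuous_intros)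
  have DSc: "continuous_on (K \<times> {0..Tm}) (\<lambda>(x, t). DS x t)" for Tm
    unfolding DS_def using Kop_joint[OF SW[of Tm]] SW[of Tm] IW[of Tm] incW[of Tm]
      fstc[OF coeff(1), of Tm] fstc[OF coeff(2), of Tm] fstc[OF coeff(3), of Tm]
    by (auto simp: case_prod_unfold intro!: continuous_intros)
  have dIK: "(I x has_real_derivative DI x t) (at t)" if "x \<in> K" "0 < t" for x t
  proof (rule extend_deriv2[OF IW DIc _ that])
    fix x and t :: real assume xt: "x \<in> \<Omega>" "0 < t"
    show "(I x has_real_derivative DI x t) (at t)"
      using sol_I[rule_format, OF xt] Kop_lborel[OF Ic[OF less_imp_le[OF xt(2)]], of x] unfolding DI_def by simp
  qed
  have dSK: "(S x has_real_derivative DS x t) (at t)" if "x \<in> K" "0 < t" for x t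
  proof (rule extend_deriv2[OF SW DSc _ that])
    fix x and t :: real assume xt: "x \<in> \<Omega>" "0 < t"
    show "(S x has_real_derivative DS x t) (at t)"
      using sol_S[rule_format, OF xt] Kop_lborel[OF Sc[OF less_imp_le[OF xt(2)]], of x] unfolding DS_def by simp
  qed
  have SsK: "dS * (Kop Sstar x - Sstar x) + \<Lambda> x = 0" if "x \<in> K" for x
  proof (rule zero_on_K[OF _ _ that])
    show "continuous_on K (\<lambda>x. dS * (Kop Sstar x - Sstar x) + \<Lambda> x)"
      by (intro continuous_intros Kop_cont Sstar(1) coeff(1))
    fix x assume "x \<in> \<Omega>"
    then show "dS * (Kop Sstar x - Sstar x) + \<Lambda> x = 0"
      using Sstar(3) Kop_lborel[OF Sstar(1), of x] by metis
  qed
  define Nw where "Nw = nrm w"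
  have cNpos: "0 < cN" by (rule cN(1))
  obtain x00 where x00: "x00 \<in> K" using Kne by (meson ex_in_conv)
  have wpos: "0 < w x" if "x \<in> K" for x
  proof -
    have "0 < 1 / cN" using cNpos by simp
    then show ?thesis using w1[OF that] by linarith
  qed
  have wle: "w x \<le> Nw" if "x \<in> K" for x using nrm_ge[OF wc that] unfolding Nw_def by simp
  have Nwpos: "0 < Nw" using wpos[OF x00] wle[OF x00] by simp
  define \<epsilon>I where "\<epsilon>I = 1 / (2 * Nw)"
  have \<epsilon>I: "0 < \<epsilon>I" unfolding \<epsilon>I_def using Nwpos by simp
  have I0c: "continuous_on K I0" by (rule init(2))
  define C where "C = nrm I0 * cN"
  have C: "0 \<le> C" unfolding C_def using nrm_nonneg[OF I0c] cNpos by simp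
  define bI where "bI x = - dI - \<gamma> x + \<beta> x" for x
  have bIB: "\<bar>bI x\<bar> \<le> dI + gmax + nrm \<beta>" if "x \<in> K" for x
    using gmax(1)[OF that] gpos[OF that] bpos[OF that] nrm_ge[OF bc that] diff(2) unfolding bI_def by auto
  have Ibound: "I x t \<le> C * exp (- \<epsilon>I * t) * w x" if x: "x \<in> K" and t: "0 \<le> t" for x t
  proof -
    have "I x t - C * exp (- \<epsilon>I * t) * w x \<le> 0"
    proof (rule comparison[where v="\<lambda>x t. I x t - C * exp (- \<epsilon>I * t) * w x"
          and D="\<lambda>x t. DI x t + \<epsilon>I * (C * exp (- \<epsilon>I * t)) * w x" and a=dI
          and b="\<lambda>x t. bI x" and B="dI + gmax + nrm \<beta>" and Tm=t])
      show "continuous_on (K \<times> {0..t}) (\<lambda>(x, t). I x t - C * exp (- \<epsilon>I * t) * w x)"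
        using IW[of t] fstc[OF wc, of t] by (auto simp: case_prod_unfold intro!: continuous_intros)
      show "I y 0 - C * exp (- \<epsilon>I * 0) * w y \<le> 0" if "y \<in> K" for y
      proof -
        have "I y 0 \<le> nrm I0" using nrm_ge[OF I0c that] sol_init that by simp
        also have "nrm I0 = C * (1 / cN)" unfolding C_def using cNpos by simp
        also have "\<dots> \<le> C * w y" by (rule mult_left_mono[OF w1[OF that] C])
        finally show ?thesis by simp
      qed
      show "((\<lambda>s. I y s - C * exp (- \<epsilon>I * s) * w y) has_real_derivative
          DI y s + \<epsilon>I * (C * exp (- \<epsilon>I * s)) * w y) (at s)" if "y \<in> K" "0 < s" "s \<le> t" for y s
      proof -
        have "((\<lambda>s. C * exp (- \<epsilon>I * s) * w y) has_real_derivative (C * (exp (- \<epsilon>I * s) * (- \<epsilon>I)) * w y)) (at s)"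
          by (rule derivative_eq_intros refl | simp)+
        from DERIV_diff[OF dIK[OF that(1,2)] this] show ?thesis by (simp add: algebra_simps)
      qed
      show "DI y s + \<epsilon>I * (C * exp (- \<epsilon>I * s)) * w y
          \<le> dI * Kop (\<lambda>y. I y s - C * exp (- \<epsilon>I * s) * w y) y + bI y * (I y s - C * exp (- \<epsilon>I * s) * w y)"
        if y: "y \<in> K" and s: "0 < s" "s \<le> t" for y s
      proof -
        define Ce where "Ce = C * exp (- \<epsilon>I * s)"
        have Ce: "0 \<le> Ce" unfolding Ce_def using C by simp
        have k: "Kop (\<lambda>z. I z s - Ce * w z) y = Kop (\<lambda>z. I z s) y - Ce * Kop w y"
          using Kop_diff[OF Ic[OF less_imp_le[OF s(1)]] continuous_on_mult[OF continuous_on_const[of K Ce] wc], where x=y]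
          by (simp add: Kop_scale)
        have inc: "\<beta> y * incid (S y s) (I y s) \<le> \<beta> y * I y s"
          using incid_bounds[of "S y s" "I y s"] sol_nonneg y s bpos[OF y]
          by (intro mult_left_mono) auto
        have h1: "Ce * (dI * Kop w y + bI y * w y) \<le> Ce * (- 1 / 2)"
          using wineq[OF y] Ce unfolding bI_def by (intro mult_left_mono) auto
        have h2: "Ce * (\<epsilon>I * w y) \<le> Ce * (1 / 2)"
        proof (rule mult_left_mono[OF _ Ce])
          have "\<epsilon>I * w y \<le> \<epsilon>I * Nw" using wle[OF y] \<epsilon>I by (intro mult_left_mono) auto
          also have "\<dots> = 1 / 2" unfolding \<epsilon>I_def using Nwpos by simp
          finally show "\<epsilon>I * w y \<le> 1 / 2" .
        qed
        have R: "dI * Kop (\<lambda>z. I z s - Ce * w z) y + bI y * (I y s - Ce * w y)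
            = (dI * Kop (\<lambda>z. I z s) y + bI y * I y s) - Ce * (dI * Kop w y + bI y * w y)"
          unfolding k by (simp add: algebra_simps)
        have Lh: "DI y s + \<epsilon>I * Ce * w y = (dI * Kop (\<lambda>z. I z s) y + bI y * I y s)
            + (\<beta> y * incid (S y s) (I y s) - \<beta> y * I y s) + Ce * (\<epsilon>I * w y)"
          unfolding DI_def bI_def by (simp add: algebra_simps)
        have "DI y s + \<epsilon>I * Ce * w y \<le> dI * Kop (\<lambda>z. I z s - Ce * w z) y + bI y * (I y s - Ce * w y)"
          unfolding R Lh using inc h1 h2 by linarith
        then show ?thesis unfolding Ce_def by (simp add: mult.assoc)
      qed
      show "\<bar>bI y\<bar> \<le> dI + gmax + nrm \<beta>" if "y \<in> K" for y by (rule bIB[OF that])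
    qed (use diff x t in auto)
    then show ?thesis by simp
  qed
  define CI where "CI = C * Nw"
  have CI: "0 \<le> CI" unfolding CI_def using C Nwpos by simp
  have Ib: "I x t \<le> CI * exp (- \<epsilon>I * t)" if x: "x \<in> K" and t: "0 \<le> t" for x t
  proof -
    have "I x t \<le> C * exp (- \<epsilon>I * t) * w x" by (rule Ibound[OF x t])
    also have "\<dots> \<le> C * exp (- \<epsilon>I * t) * Nw" using C wle[OF x] by (intro mult_left_mono) auto
    finally show ?thesis unfolding CI_def by (simp add: ac_simps)
  qed
  obtain \<Lambda>0 where \<Lambda>0: "0 < \<Lambda>0" "\<And>x. x \<in> K \<Longrightarrow> \<Lambda>0 \<le> \<Lambda> x"
    using min_pos[OF coeff(1)] coeff(4) by blast
  obtain Ss0 where Ss0: "0 < Ss0" "\<And>x. x \<in> K \<Longrightarrow> Ss0 \<le> Sstar x"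
    using min_pos[OF Sstar(1)] Sstar(2) by blast
  define NS where "NS = nrm Sstar"
  have SsNS: "Sstar x \<le> NS" if "x \<in> K" for x using nrm_ge[OF Sstar(1) that] unfolding NS_def by simp
  have NSpos: "Ss0 \<le> NS" using Ss0(2)[OF x00] SsNS[OF x00] by simp
  have S0c: "continuous_on K S0" by (rule init(1))
  define \<epsilon>' where "\<epsilon>' = min \<epsilon>I (\<Lambda>0 / (2 * NS))"
  have \<epsilon>': "0 < \<epsilon>'" "\<epsilon>' \<le> \<epsilon>I" unfolding \<epsilon>'_def using \<epsilon>I \<Lambda>0 NSpos Ss0 by auto
  have \<epsilon>'S: "\<epsilon>' * Sstar x \<le> \<Lambda> x / 2" if "x \<in> K" for x
  proof -
    have "\<epsilon>' * Sstar x \<le> (\<Lambda>0 / (2 * NS)) * NS"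
      using SsNS[OF that] Ss0(2)[OF that] Ss0(1) \<epsilon>'(1) unfolding \<epsilon>'_def
      by (intro mult_mono) auto
    also have "\<dots> = \<Lambda>0 / 2" using NSpos Ss0 by simp
    finally show ?thesis using \<Lambda>0(2)[OF that] by simp
  qed
  define C3 where "C3 = (nrm S0 + NS) / Ss0 + 2 * (gmax + nrm \<beta>) * CI / \<Lambda>0"
  have C3a: "(nrm S0 + NS) / Ss0 \<le> C3" and C3b: "2 * (gmax + nrm \<beta>) * CI / \<Lambda>0 \<le> C3"
  proof -
    have "0 \<le> (nrm S0 + NS) / Ss0" using nrm_nonneg[OF S0c] NSpos Ss0 by simp
    moreover have "0 \<le> 2 * (gmax + nrm \<beta>) * CI / \<Lambda>0"
      using CI \<Lambda>0 nrm_nonneg[OF bc] gmax g0 by simp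
    ultimately show "(nrm S0 + NS) / Ss0 \<le> C3" "2 * (gmax + nrm \<beta>) * CI / \<Lambda>0 \<le> C3"
      unfolding C3_def by linarith+
  qed
  have C3nn: "0 \<le> C3" using C3b CI \<Lambda>0 nrm_nonneg[OF bc] gmax g0
    by (smt (verit, best) divide_nonneg_pos mult_nonneg_nonneg)
  have C3S: "nrm S0 + NS \<le> C3 * Sstar x" if "x \<in> K" for x
  proof -
    have "nrm S0 + NS = ((nrm S0 + NS) / Ss0) * Ss0" using Ss0 by simp
    also have "\<dots> \<le> C3 * Sstar x"
      using C3a Ss0(2)[OF that] Ss0(1) nrm_nonneg[OF S0c] NSpos C3nn by (intro mult_mono) auto
    finally show ?thesis .
  qed
  have C3L: "(gmax + nrm \<beta>) * CI \<le> C3 * (\<Lambda> x / 2)" if "x \<in> K" for x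
  proof -
    have "(gmax + nrm \<beta>) * CI = (2 * (gmax + nrm \<beta>) * CI / \<Lambda>0) * (\<Lambda>0 / 2)" using \<Lambda>0 by simp
    also have "\<dots> \<le> C3 * (\<Lambda> x / 2)"
      using C3b \<Lambda>0(2)[OF that] \<Lambda>0(1) C3nn by (intro mult_mono) auto
    finally show ?thesis .
  qed
  have expmono: "exp (- \<epsilon>I * t) \<le> exp (- \<epsilon>' * t)" if "0 \<le> t" for t
    using \<epsilon>'(2) that by (simp add: mult_right_mono)
  have gI: "\<gamma> x * I x t \<le> gmax * CI * exp (- \<epsilon>' * t)" "0 \<le> \<gamma> x * I x t"
    if "x \<in> K" "0 \<le> t" for x t
  proof -
    have "\<gamma> x * I x t \<le> gmax * (CI * exp (- \<epsilon>I * t))"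
      using Ib[OF that] gmax(1)[OF that(1)] gpos[OF that(1)] sol_nonneg that
      by (intro mult_mono) auto
    also have "\<dots> \<le> gmax * (CI * exp (- \<epsilon>' * t))"
      using expmono[OF that(2)] CI gmax g0 by (intro mult_left_mono) auto
    finally show "\<gamma> x * I x t \<le> gmax * CI * exp (- \<epsilon>' * t)" by (simp add: ac_simps)
    show "0 \<le> \<gamma> x * I x t" using gpos[OF that(1)] sol_nonneg that by simp
  qed
  have bI: "\<beta> x * incid (S x t) (I x t) \<le> nrm \<beta> * CI * exp (- \<epsilon>' * t)"
    "0 \<le> \<beta> x * incid (S x t) (I x t)" if "x \<in> K" "0 \<le> t" for x t
  proof -
    have inc: "0 \<le> incid (S x t) (I x t)" "incid (S x t) (I x t) \<le> I x t"
      using incid_bounds[of "S x t" "I x t"] sol_nonneg that by auto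
    have "\<beta> x * incid (S x t) (I x t) \<le> nrm \<beta> * (CI * exp (- \<epsilon>I * t))"
      using Ib[OF that] inc nrm_ge[OF bc that(1)] bpos[OF that(1)] by (intro mult_mono) auto
    also have "\<dots> \<le> nrm \<beta> * (CI * exp (- \<epsilon>' * t))"
      using expmono[OF that(2)] CI nrm_nonneg[OF bc] by (intro mult_left_mono) auto
    finally show "\<beta> x * incid (S x t) (I x t) \<le> nrm \<beta> * CI * exp (- \<epsilon>' * t)" by (simp add: ac_simps)
    show "0 \<le> \<beta> x * incid (S x t) (I x t)" using inc bpos[OF that(1)] by simp
  qed
  have Sup: "S x t - (1 + C3 * exp (- \<epsilon>' * t)) * Sstar x \<le> 0" if x: "x \<in> K" and t: "0 \<le> t" for x t
  proof (rule comparison[where v="\<lambda>x t. S x t - (1 + C3 * exp (- \<epsilon>' * t)) * Sstar x"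
        and D="\<lambda>x t. DS x t + C3 * exp (- \<epsilon>' * t) * \<epsilon>' * Sstar x" and a=dS
        and b="\<lambda>x t. - dS" and B="dS" and Tm=t])
    show "continuous_on (K \<times> {0..t}) (\<lambda>(x, t). S x t - (1 + C3 * exp (- \<epsilon>' * t)) * Sstar x)"
      using SW[of t] fstc[OF Sstar(1), of t] by (auto simp: case_prod_unfold intro!: continuous_intros)
    show "S y 0 - (1 + C3 * exp (- \<epsilon>' * 0)) * Sstar y \<le> 0" if "y \<in> K" for y
    proof -
      have "S y 0 \<le> nrm S0" using nrm_ge[OF S0c that] sol_init that by simp
      also have "\<dots> \<le> C3 * Sstar y" using C3S[OF that] NSpos Ss0 by linarith
      finally have "S y 0 \<le> C3 * Sstar y" .
      moreover have "0 < Sstar y" using Sstar(2) that by simp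
      ultimately show ?thesis by (simp add: algebra_simps)
    qed
    show "((\<lambda>s. S y s - (1 + C3 * exp (- \<epsilon>' * s)) * Sstar y) has_real_derivative
        DS y s + C3 * exp (- \<epsilon>' * s) * \<epsilon>' * Sstar y) (at s)" if "y \<in> K" "0 < s" "s \<le> t" for y s
    proof -
      have "((\<lambda>s. (1 + C3 * exp (- \<epsilon>' * s)) * Sstar y) has_real_derivative (C3 * (exp (- \<epsilon>' * s) * (- \<epsilon>')) * Sstar y)) (at s)"
        by (rule derivative_eq_intros refl | simp)+
      from DERIV_diff[OF dSK[OF that(1,2)] this] show ?thesis by (simp add: algebra_simps)
    qed
    show "DS y s + C3 * exp (- \<epsilon>' * s) * \<epsilon>' * Sstar y
        \<le> dS * Kop (\<lambda>y. S y s - (1 + C3 * exp (- \<epsilon>' * s)) * Sstar y) y + - dS * (S y s - (1 + C3 * exp (- \<epsilon>' * s)) * Sstar y)"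
      if y: "y \<in> K" and s: "0 < s" "s \<le> t" for y s
    proof -
      define e where "e = exp (- \<epsilon>' * s)"
      have e: "0 \<le> e" unfolding e_def by simp
      have k: "Kop (\<lambda>z. S z s - (1 + C3 * e) * Sstar z) y = Kop (\<lambda>z. S z s) y - (1 + C3 * e) * Kop Sstar y"
        using Kop_diff[OF Sc[OF less_imp_le[OF s(1)]] continuous_on_mult[OF continuous_on_const[of K "1 + C3 * e"] Sstar(1)], where x=y]
        by (simp add: Kop_scale)
      have R: "dS * Kop (\<lambda>z. S z s - (1 + C3 * e) * Sstar z) y + - dS * (S y s - (1 + C3 * e) * Sstar y)
          = dS * (Kop (\<lambda>z. S z s) y - S y s) - (1 + C3 * e) * (dS * (Kop Sstar y - Sstar y))"
        unfolding k by (simp add: algebra_simps)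
      have Lh: "DS y s + C3 * e * \<epsilon>' * Sstar y = dS * (Kop (\<lambda>z. S z s) y - S y s) + \<Lambda> y
          - \<beta> y * incid (S y s) (I y s) + \<gamma> y * I y s + (C3 * e) * (\<epsilon>' * Sstar y)"
        unfolding DS_def by (simp add: algebra_simps)
      have h1: "(C3 * e) * (\<epsilon>' * Sstar y) \<le> (C3 * e) * (\<Lambda> y / 2)"
        using \<epsilon>'S[OF y] C3nn e by (intro mult_left_mono) auto
      have h3: "(gmax + nrm \<beta>) * CI * e \<le> (C3 * e) * (\<Lambda> y / 2)"
        using mult_right_mono[OF C3L[OF y] e] by (simp add: ac_simps)
      have h4: "gmax * CI * e \<le> (gmax + nrm \<beta>) * CI * e"
        using CI e nrm_nonneg[OF bc] by (intro mult_right_mono) (auto simp: algebra_simps)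
      have X: "dS * (Kop Sstar y - Sstar y) = - \<Lambda> y" using SsK[OF y] by linarith
      have eq: "(1 + C3 * e) * (dS * (Kop Sstar y - Sstar y)) = - (1 + C3 * e) * \<Lambda> y"
        unfolding X by (simp add: algebra_simps)
      show ?thesis
        unfolding e_def[symmetric] using R Lh h1 h3 h4 eq gI[OF y less_imp_le[OF s(1)]] bI[OF y less_imp_le[OF s(1)]]
        unfolding e_def[symmetric] by (simp add: algebra_simps; linarith)
    qed
  qed (use diff x t in auto)
  have Slow: "(1 - C3 * exp (- \<epsilon>' * t)) * Sstar x - S x t \<le> 0" if x: "x \<in> K" and t: "0 \<le> t" for x t
  proof (rule comparison[where v="\<lambda>x t. (1 - C3 * exp (- \<epsilon>' * t)) * Sstar x - S x t"
        and D="\<lambda>x t. - DS x t + C3 * exp (- \<epsilon>' * t) * \<epsilon>' * Sstar x" and a=dS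
        and b="\<lambda>x t. - dS" and B="dS" and Tm=t])
    show "continuous_on (K \<times> {0..t}) (\<lambda>(x, t). (1 - C3 * exp (- \<epsilon>' * t)) * Sstar x - S x t)"
      using SW[of t] fstc[OF Sstar(1), of t] by (auto simp: case_prod_unfold intro!: continuous_intros)
    show "(1 - C3 * exp (- \<epsilon>' * 0)) * Sstar y - S y 0 \<le> 0" if "y \<in> K" for y
    proof -
      have "1 \<le> C3"
      proof -
        have "1 \<le> (nrm S0 + NS) / Ss0" using NSpos Ss0 nrm_nonneg[OF S0c] by simp
        then show ?thesis using C3a by simp
      qed
      moreover have "0 < Sstar y" using Sstar(2) that by simp
      ultimately have "(1 - C3) * Sstar y \<le> 0" by (intro mult_nonpos_nonneg) auto
      moreover have "0 \<le> S y 0" using sol_nonneg that by simp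
      ultimately show ?thesis by simp
    qed
    show "((\<lambda>s. (1 - C3 * exp (- \<epsilon>' * s)) * Sstar y - S y s) has_real_derivative
        - DS y s + C3 * exp (- \<epsilon>' * s) * \<epsilon>' * Sstar y) (at s)" if "y \<in> K" "0 < s" "s \<le> t" for y s
    proof -
      have "((\<lambda>s. (1 - C3 * exp (- \<epsilon>' * s)) * Sstar y) has_real_derivative (- (C3 * (exp (- \<epsilon>' * s) * (- \<epsilon>'))) * Sstar y)) (at s)"
        by (rule derivative_eq_intros refl | simp)+
      from DERIV_diff[OF this dSK[OF that(1,2)]] show ?thesis by (simp add: algebra_simps)
    qed
    show "- DS y s + C3 * exp (- \<epsilon>' * s) * \<epsilon>' * Sstar y
        \<le> dS * Kop (\<lambda>y. (1 - C3 * exp (- \<epsilon>' * s)) * Sstar y - S y s) y + - dS * ((1 - C3 * exp (- \<epsilon>' * s)) * Sstar y - S y s)"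
      if y: "y \<in> K" and s: "0 < s" "s \<le> t" for y s
    proof -
      define e where "e = exp (- \<epsilon>' * s)"
      have e: "0 \<le> e" unfolding e_def by simp
      have k: "Kop (\<lambda>z. (1 - C3 * e) * Sstar z - S z s) y = (1 - C3 * e) * Kop Sstar y - Kop (\<lambda>z. S z s) y"
        using Kop_diff[OF continuous_on_mult[OF continuous_on_const[of K "1 - C3 * e"] Sstar(1)] Sc[OF less_imp_le[OF s(1)]], where x=y]
        by (simp add: Kop_scale)
      have R: "dS * Kop (\<lambda>z. (1 - C3 * e) * Sstar z - S z s) y + - dS * ((1 - C3 * e) * Sstar y - S y s)
          = (1 - C3 * e) * (dS * (Kop Sstar y - Sstar y)) - dS * (Kop (\<lambda>z. S z s) y - S y s)"
        unfolding k by (simp add: algebra_simps)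
      have Lh: "- DS y s + C3 * e * \<epsilon>' * Sstar y = - (dS * (Kop (\<lambda>z. S z s) y - S y s)) - \<Lambda> y
          + \<beta> y * incid (S y s) (I y s) - \<gamma> y * I y s + (C3 * e) * (\<epsilon>' * Sstar y)"
        unfolding DS_def by (simp add: algebra_simps)
      have h1: "(C3 * e) * (\<epsilon>' * Sstar y) \<le> (C3 * e) * (\<Lambda> y / 2)"
        using \<epsilon>'S[OF y] C3nn e by (intro mult_left_mono) auto
      have h3: "(gmax + nrm \<beta>) * CI * e \<le> (C3 * e) * (\<Lambda> y / 2)"
        using mult_right_mono[OF C3L[OF y] e] by (simp add: ac_simps)
      have h4: "nrm \<beta> * CI * e \<le> (gmax + nrm \<beta>) * CI * e"
        using CI e gmax g0 by (intro mult_right_mono) (auto simp: algebra_simps)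
      have X: "dS * (Kop Sstar y - Sstar y) = - \<Lambda> y" using SsK[OF y] by linarith
      have eq: "(1 - C3 * e) * (dS * (Kop Sstar y - Sstar y)) = - (1 - C3 * e) * \<Lambda> y"
        unfolding X by (simp add: algebra_simps)
      show ?thesis
        unfolding e_def[symmetric] using R Lh h1 h3 h4 eq gI[OF y less_imp_le[OF s(1)]] bI[OF y less_imp_le[OF s(1)]]
        unfolding e_def[symmetric] by (simp add: algebra_simps; linarith)
    qed
  qed (use diff x t in auto)
  have Sb: "\<bar>S x t - Sstar x\<bar> \<le> C3 * NS * exp (- \<epsilon>' * t)" if x: "x \<in> K" and t: "0 \<le> t" for x t
  proof -
    have "\<bar>S x t - Sstar x\<bar> \<le> C3 * exp (- \<epsilon>' * t) * Sstar x"
      using Sup[OF x t] Slow[OF x t] by (simp add: algebra_simps)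
    also have "\<dots> \<le> C3 * exp (- \<epsilon>' * t) * NS" using SsNS[OF x] C3nn by (intro mult_left_mono) auto
    finally show ?thesis by (simp add: ac_simps)
  qed
  have Ib2: "\<bar>I x t - 0\<bar> \<le> CI * exp (- \<epsilon>I * t)" if x: "x \<in> K" and t: "0 \<le> t" for x t
    using Ib[OF x t] sol_nonneg x t by simp
  have explim: "\<forall>\<^sub>F t in at_top. Cc * exp (- ec * t) < e" if "0 < ec" "0 \<le> Cc" "0 < e" for Cc ec e :: real
  proof -
    have "filterlim (\<lambda>s. ec * s) at_top at_top"
      by (rule filterlim_tendsto_pos_mult_at_top[OF tendsto_const that(1) filterlim_ident])
    then have "filterlim (\<lambda>s. - ec * s) at_bot at_top" by (simp add: filterlim_uminus_at_bot)
    then have "((\<lambda>s. exp (- ec * s)) \<longlongrightarrow> 0) at_top" by (rule filterlim_compose[OF exp_at_bot])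
    then have "((\<lambda>s. Cc * exp (- ec * s)) \<longlongrightarrow> Cc * 0) at_top" by (intro tendsto_intros)
    then show ?thesis using that(3) by (intro order_tendstoD) auto
  qed
  have C3NS: "0 \<le> C3 * NS" using C3nn NSpos Ss0 by simp
  show ?thesis
  proof
    show "uniform_limit K (\<lambda>t x. S x t) Sstar at_top"
    proof (rule uniform_limitI)
      fix e :: real assume "0 < e"
      show "\<forall>\<^sub>F t in at_top. \<forall>x\<in>K. dist (S x t) (Sstar x) < e"
        using eventually_conj[OF explim[OF \<epsilon>'(1) C3NS \<open>0 < e\<close>] eventually_ge_at_top[of "0::real"]]
      proof eventually_elim
        case (elim t)
        then show ?case using Sb by (force simp: dist_real_def)
      qed
    qed
    show "uniform_limit K (\<lambda>t x. I x t) (\<lambda>x. 0) at_top"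
    proof (rule uniform_limitI)
      fix e :: real assume "0 < e"
      show "\<forall>\<^sub>F t in at_top. \<forall>x\<in>K. dist (I x t) 0 < e"
        using eventually_conj[OF explim[OF \<epsilon>I CI \<open>0 < e\<close>] eventually_ge_at_top[of "0::real"]]
      proof eventually_elim
        case (elim t)
        then show ?case using Ib2 by (force simp: dist_real_def)
      qed
    qed
  qed
qed

end
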